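(* Let $g\ge 3$ and $n\ge g+2$. Suppose $G$ is a connected graph of order $n$ with girth $g$ whose Sombor index $SO(G)$ is minimum among all connected graphs of order $n$ with girth $g$. Then $G$ is unicyclic and is isomorphic to the graph obtained from the cycle $C_g$ by attaching a single path of length $n-g$ at one vertex of the cycle (i.e. the unicyclic graph with cycle length $g$ having exactly one pendent path, of length at least two); in particular $SO(G)=\sqrt5+3\sqrt{13}+2\sqrt2\,(n-4)$.
   Context: For a graph $G$, $d_G(w)$ denotes the degree of vertex $w$, and the Sombor index is $SO(G)=\sum_{ab\in E(G)}\sqrt{d_G(a)^2+d_G(b)^2}$. The girth of a graph is the length of its shortest cycle. $C_g$ denotes the cycle on $g$ vertices. A pendent path in $G$ is a path $u u_1\cdots u_k$ ($k\ge1$) with $d_G(u)\ge 3$, $d_G(u_k)=1$ and $d_G(u_i)=2$ for $1\le i\le k-1$; $k$ is its length. *)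

theory Defs
  imports Complex_Main
begin

definition simple_graph :: "'a set \<Rightarrow> 'a set set \<Rightarrow> bool" where
  "simple_graph V E \<longleftrightarrow> finite V \<and>
     (\<forall>e\<in>E. \<exists>a b. a \<noteq> b \<and> a \<in> V \<and> b \<in> V \<and> e = {a, b})"

definition degree :: "'a set set \<Rightarrow> 'a \<Rightarrow> nat" where
  "degree E v = card {e\<in>E. v \<in> e}"

definition adj :: "'a set set \<Rightarrow> 'a \<Rightarrow> 'a \<Rightarrow> bool" where
  "adj E u v \<longleftrightarrow> {u, v} \<in> E"

definition connected_graph :: "'a set \<Rightarrow> 'a set set \<Rightarrow> bool" where
  "connected_graph V E \<longleftrightarrow> V \<noteq> {} \<and> (\<forall>u\<in>V. \<forall>v\<in>V. (adj E)\<^sup>*\<^sup>* u v)"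

definition sombor :: "'a set set \<Rightarrow> real" where
  "sombor E = (\<Sum>e\<in>E. sqrt (\<Sum>x\<in>e. (real (degree E x))^2))"

definition is_cycle :: "'a set set \<Rightarrow> 'a list \<Rightarrow> bool" where
  "is_cycle E xs \<longleftrightarrow> length xs \<ge> 3 \<and> distinct xs \<and>
     (\<forall>i<length xs. {xs ! i, xs ! ((i + 1) mod length xs)} \<in> E)"

definition cycle_edges :: "'a list \<Rightarrow> 'a set set" where
  "cycle_edges xs = {{xs ! i, xs ! ((i + 1) mod length xs)} | i. i < length xs}"

definition has_girth :: "'a set set \<Rightarrow> nat \<Rightarrow> bool" where
  "has_girth E g \<longleftrightarrow> (\<exists>xs. is_cycle E xs \<and> length xs = g) \<and>
     (\<forall>xs. is_cycle E xs \<longrightarrow> g \<le> length xs)"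

text \<open>Unicyclic: connected with exactly one cycle (as a subgraph, i.e. as an edge set).\<close>
definition unicyclic :: "'a set \<Rightarrow> 'a set set \<Rightarrow> bool" where
  "unicyclic V E \<longleftrightarrow> connected_graph V E \<and> card {cycle_edges xs | xs. is_cycle E xs} = 1"

definition graph_iso :: "'a set \<Rightarrow> 'a set set \<Rightarrow> 'b set \<Rightarrow> 'b set set \<Rightarrow> bool" where
  "graph_iso V E V' E' \<longleftrightarrow> (\<exists>f. bij_betw f V V' \<and>
     (\<forall>u\<in>V. \<forall>v\<in>V. {u, v} \<in> E \<longleftrightarrow> {f u, f v} \<in> E'))"

text \<open>Cycle C_g on 0,...,g-1 with a path 0, g, g+1, ..., n-1 (length n-g) attached at vertex 0.\<close>
definition tadpole_V :: "nat \<Rightarrow> nat set" where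
  "tadpole_V n = {0..<n}"

definition tadpole_E :: "nat \<Rightarrow> nat \<Rightarrow> nat set set" where
  "tadpole_E g n = {{i, Suc i} | i. Suc i < g} \<union> {{g - 1, 0}} \<union> {{0, g}}
                   \<union> {{i, Suc i} | i. g \<le> i \<and> Suc i < n}"

end

theory Submission
  imports Defs
begin


lemma sg_edge: "simple_graph V E \<Longrightarrow> e \<in> E \<Longrightarrow> \<exists>a b. a \<noteq> b \<and> a \<in> V \<and> b \<in> V \<and> e = {a,b}"
  unfolding simple_graph_def by blast

lemma sg_finV: "simple_graph V E \<Longrightarrow> finite V"
  unfolding simple_graph_def by blast

lemma sg_sub: "simple_graph V E \<Longrightarrow> e \<in> E \<Longrightarrow> e \<subseteq> V"
  by (drule (1) sg_edge) auto

lemma sg_card2: "simple_graph V E \<Longrightarrow> e \<in> E \<Longrightarrow> card e = 2"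
  by (drule (1) sg_edge) auto

lemma sg_finE: "simple_graph V E \<Longrightarrow> finite E"
proof -
  assume s: "simple_graph V E"
  have "E \<subseteq> Pow V" using sg_sub[OF s] by blast
  thus ?thesis using sg_finV[OF s] finite_subset by blast
qed

lemma sg_fin_e: "simple_graph V E \<Longrightarrow> e \<in> E \<Longrightarrow> finite e"
  by (drule (1) sg_edge) auto

lemma double_count:
  assumes s: "simple_graph V E"
  shows "(\<Sum>e\<in>E. \<Sum>x\<in>e. F e x) = (\<Sum>v\<in>V. \<Sum>e\<in>{e\<in>E. v \<in> e}. F e v)"
proof -
  have "(\<Sum>v\<in>V. \<Sum>e\<in>{e\<in>E. v \<in> e}. F e v) = (\<Sum>e\<in>E. \<Sum>v\<in>{v\<in>V. v \<in> e}. F e v)"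
    by (rule sum.swap_restrict[OF sg_finV[OF s] sg_finE[OF s]])
  also have "\<dots> = (\<Sum>e\<in>E. \<Sum>x\<in>e. F e x)"
  proof (rule sum.cong[OF refl])
    fix e assume "e \<in> E"
    then have "{v\<in>V. v \<in> e} = e" using sg_sub[OF s] by blast
    thus "(\<Sum>v\<in>{v\<in>V. v \<in> e}. F e v) = (\<Sum>x\<in>e. F e x)" by simp
  qed
  finally show ?thesis by simp
qed

lemma handshake:
  assumes s: "simple_graph V E"
  shows "(\<Sum>v\<in>V. degree E v) = 2 * card E"
proof -
  have "(\<Sum>e\<in>E. \<Sum>x\<in>e. (1::nat)) = (\<Sum>v\<in>V. \<Sum>e\<in>{e\<in>E. v \<in> e}. 1)"
    by (rule double_count[OF s])
  moreover have "(\<Sum>e\<in>E. \<Sum>x\<in>e. (1::nat)) = (\<Sum>e\<in>E. 2)"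
    using sg_card2[OF s] by (intro sum.cong) auto
  ultimately show ?thesis unfolding degree_def by simp
qed

lemma adj_sym: "adj E x y \<Longrightarrow> adj E y x"
  unfolding adj_def by (simp add: insert_commute)

lemma rtr_sym: "(adj E)\<^sup>*\<^sup>* x y \<Longrightarrow> (adj E)\<^sup>*\<^sup>* y x"
proof (induction rule: rtranclp_induct)
  case base then show ?case by simp
next
  case (step y z) then show ?case
    by (meson adj_sym converse_rtranclp_into_rtranclp)
qed

lemma rtr_map:
  assumes "\<And>a b. R a b \<Longrightarrow> S\<^sup>*\<^sup>* (h a) (h b)" "R\<^sup>*\<^sup>* x y"
  shows "S\<^sup>*\<^sup>* (h x) (h y)"
  using assms(2)
proof (induction rule: rtranclp_induct)
  case base then show ?case by simp
next
  case (step y z) then show ?case using assms(1) by (meson rtranclp_trans)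
qed

lemma adj_in: "simple_graph V E \<Longrightarrow> adj E x y \<Longrightarrow> x \<in> V \<and> y \<in> V"
  unfolding adj_def using sg_sub by blast

lemma closure_all:
  assumes c: "connected_graph V E" and x: "x \<in> S" "x \<in> V"
    and cl: "\<And>a b. a \<in> S \<Longrightarrow> adj E a b \<Longrightarrow> b \<in> S"
  shows "V \<subseteq> S"
proof
  fix v assume v: "v \<in> V"
  have "(adj E)\<^sup>*\<^sup>* x v" using c x v unfolding connected_graph_def by blast
  then show "v \<in> S"
    by (induction rule: rtranclp_induct) (use x cl in auto)
qed

lemma deg_pos: "simple_graph V E \<Longrightarrow> e \<in> E \<Longrightarrow> x \<in> e \<Longrightarrow> degree E x \<ge> 1"
  unfolding degree_def
  by (metis (mono_tags, lifting) One_nat_def Suc_leI card_gt_0_iff empty_iff finite_subset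
      mem_Collect_eq sg_finE subsetI)

lemma deg1_edges:
  assumes s: "simple_graph V E" and d: "degree E x = 1" and e: "{x,y} \<in> E"
  shows "{e\<in>E. x \<in> e} = {{x,y}}"
proof -
  have "{x,y} \<in> {e\<in>E. x \<in> e}" using e by simp
  moreover obtain z where "{e\<in>E. x \<in> e} = {z}" using d unfolding degree_def
    by (meson card_1_singletonE)
  ultimately show ?thesis by auto
qed

lemma deg1_adj:
  assumes s: "simple_graph V E" and d: "degree E x = 1" and e: "{x,y} \<in> E"
    and a: "adj E x z"
  shows "z = y"
proof -
  have "{x,z} \<in> {e\<in>E. x \<in> e}" using a unfolding adj_def by simp
  then have "{x,z} = {x,y}" using deg1_edges[OF s d e] by simp
  moreover have "x \<noteq> z"
  proof
    assume "x = z"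
    then have "card {x,z} = 1" by simp
    moreover have "card {x,z} = 2" using sg_card2[OF s] a unfolding adj_def by blast
    ultimately show False by simp
  qed
  ultimately show ?thesis by (metis doubleton_eq_iff)
qed

lemma deg_ge1_ex:
  assumes s: "simple_graph V E" and "degree E x \<ge> 1"
  shows "\<exists>y. {x,y} \<in> E \<and> y \<noteq> x \<and> y \<in> V"
proof -
  have "{e\<in>E. x \<in> e} \<noteq> {}" using assms(2) unfolding degree_def by (metis card.empty not_one_le_zero)
  then obtain e where e: "e \<in> E" "x \<in> e" by blast
  then obtain a b where ab: "a \<noteq> b" "a \<in> V" "b \<in> V" "e = {a,b}" using sg_edge[OF s] by blast
  show ?thesis
  proof (cases "x = a")
    case True then show ?thesis using ab e by auto
  next
    case False then have "x = b" using ab e by auto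
    then show ?thesis using ab e by (auto simp: insert_commute)
  qed
qed

lemma deg_nbrs:
  assumes s: "simple_graph V E" and v: "v \<in> V"
  shows "degree E v = card {u\<in>V. {v,u} \<in> E}"
proof -
  have "{e\<in>E. v \<in> e} = (\<lambda>u. {v,u}) ` {u\<in>V. {v,u} \<in> E}"
  proof
    show "{e\<in>E. v \<in> e} \<subseteq> (\<lambda>u. {v,u}) ` {u\<in>V. {v,u} \<in> E}"
    proof
      fix e assume "e \<in> {e\<in>E. v \<in> e}"
      then obtain a b where "a \<in> V" "b \<in> V" "e = {a,b}" "e \<in> E" "v \<in> e" using sg_edge[OF s] by blast
      then show "e \<in> (\<lambda>u. {v,u}) ` {u\<in>V. {v,u} \<in> E}" by (auto simp: insert_commute)
    qed
  qed auto
  moreover have "inj_on (\<lambda>u. {v,u}) {u\<in>V. {v,u} \<in> E}"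
    by (auto simp: inj_on_def doubleton_eq_iff)
  ultimately show ?thesis unfolding degree_def by (simp add: card_image)
qed


lemma cyc_set_sub:
  assumes s: "simple_graph V E" and c: "is_cycle E xs"
  shows "set xs \<subseteq> V"
proof
  fix x assume "x \<in> set xs"
  then obtain i where i: "i < length xs" "xs ! i = x" by (auto simp: in_set_conv_nth)
  then have "{xs ! i, xs ! ((i + 1) mod length xs)} \<in> E" using c unfolding is_cycle_def by blast
  then show "x \<in> V" using sg_sub[OF s] i by blast
qed

lemma cyc_two:
  assumes c: "is_cycle E xs" and i: "i < length xs"
  defines "p \<equiv> (if i = 0 then length xs - 1 else i - 1)"
  shows "{xs ! i, xs ! (Suc i mod length xs)} \<in> E" "{xs ! p, xs ! i} \<in> E"
    "{xs ! i, xs ! (Suc i mod length xs)} \<noteq> {xs ! p, xs ! i}"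
    "Suc p mod length xs = i" "p < length xs"
proof -
  let ?L = "length xs"
  have L: "?L \<ge> 3" "distinct xs" using c unfolding is_cycle_def by auto
  show pl: "p < ?L" using i L unfolding p_def by auto
  show sp: "Suc p mod ?L = i" using i L unfolding p_def by auto
  show "{xs ! i, xs ! (Suc i mod ?L)} \<in> E" using c i unfolding is_cycle_def by simp
  have "{xs ! p, xs ! (Suc p mod ?L)} \<in> E" using c pl unfolding is_cycle_def by simp
  then show "{xs ! p, xs ! i} \<in> E" using sp by simp
  show "{xs ! i, xs ! (Suc i mod ?L)} \<noteq> {xs ! p, xs ! i}"
  proof
    assume "{xs ! i, xs ! (Suc i mod ?L)} = {xs ! p, xs ! i}"
    moreover have "xs ! (Suc i mod ?L) \<noteq> xs ! i"
    proof -
      have "Suc i mod ?L < ?L" "Suc i mod ?L \<noteq> i" using L i by (auto simp: mod_Suc)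
      then show ?thesis using L i by (simp add: nth_eq_iff_index_eq)
    qed
    ultimately have "xs ! (Suc i mod ?L) = xs ! p" by (auto simp: doubleton_eq_iff)
    moreover have "Suc i mod ?L < ?L" using L(1) by (intro mod_less_divisor) linarith
    ultimately have "Suc i mod ?L = p" using L pl by (simp add: nth_eq_iff_index_eq)
    then show False using L i unfolding p_def by (auto simp: mod_Suc split: if_splits)
  qed
qed

lemma cyc_deg2:
  assumes f: "finite E" and c: "is_cycle E xs" and x: "x \<in> set xs"
  shows "degree E x \<ge> 2"
proof -
  obtain i where i: "i < length xs" "xs ! i = x" using x by (auto simp: in_set_conv_nth)
  note t = cyc_two[OF c i(1)]
  let ?A = "{xs ! i, xs ! (Suc i mod length xs)}"
  let ?B = "{xs ! (if i = 0 then length xs - 1 else i - 1), xs ! i}"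
  have "{?A, ?B} \<subseteq> {e\<in>E. x \<in> e}" using t i by auto
  then have "card {?A, ?B} \<le> card {e\<in>E. x \<in> e}" by (rule card_mono[rotated]) (use f in auto)
  then show ?thesis using t(3) unfolding degree_def by simp
qed

lemma cyc_deg_le2:
  assumes f: "finite E" and c: "is_cycle E xs" and i: "i < length xs"
    and d: "degree E (xs ! i) \<le> 2"
  shows "{e\<in>E. xs ! i \<in> e} = {{xs ! i, xs ! (Suc i mod length xs)},
            {xs ! (if i = 0 then length xs - 1 else i - 1), xs ! i}}"
proof -
  note t = cyc_two[OF c i(1)]
  let ?A = "{xs ! i, xs ! (Suc i mod length xs)}"
  let ?B = "{xs ! (if i = 0 then length xs - 1 else i - 1), xs ! i}"
  have sub: "{?A, ?B} \<subseteq> {e\<in>E. xs ! i \<in> e}" using t by auto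
  have "card {?A, ?B} = 2" using t(3) by simp
  then have "card {e\<in>E. xs ! i \<in> e} \<le> card {?A, ?B}" using d unfolding degree_def by simp
  then show ?thesis using sub f by (intro card_seteq[symmetric]) auto
qed

lemma pair_mem: "{x,y} \<in> {{x,a},{b,x}} \<Longrightarrow> y \<in> {x,a,b}"
  by (auto simp: doubleton_eq_iff)

lemma cyc_closed:
  assumes f: "finite E" and c: "is_cycle E xs" and x: "x \<in> set xs"
    and d: "degree E x \<le> 2" and a: "adj E x y"
  shows "y \<in> set xs"
proof -
  obtain i where i: "i < length xs" "xs ! i = x" using x by (auto simp: in_set_conv_nth)
  have mem: "{x,y} \<in> {e\<in>E. xs ! i \<in> e}" using a i unfolding adj_def by simp
  have d': "degree E (xs ! i) \<le> 2" unfolding i(2) by (rule d)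
  have "{x,y} \<in> {{xs ! i, xs ! (Suc i mod length xs)},
            {xs ! (if i = 0 then length xs - 1 else i - 1), xs ! i}}"
    using mem unfolding cyc_deg_le2[OF f c i(1) d'] .
  then have "{x,y} \<in> {{x, xs ! (Suc i mod length xs)},
            {xs ! (if i = 0 then length xs - 1 else i - 1), x}}" unfolding i(2) .
  then have "y \<in> {x, xs ! (Suc i mod length xs), xs ! (if i = 0 then length xs - 1 else i - 1)}"
    by (rule pair_mem)
  moreover have "xs ! (Suc i mod length xs) \<in> set xs" using i(1) by (intro nth_mem mod_less_divisor) linarith
  moreover have "xs ! (if i = 0 then length xs - 1 else i - 1) \<in> set xs" by (intro nth_mem cyc_two(5)[OF c i(1)])
  ultimately show ?thesis using x by blast
qed

lemma two_reg:
  assumes s: "simple_graph V E" and cn: "connected_graph V E" and c: "is_cycle E xs"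
    and d: "\<forall>x\<in>set xs. degree E x \<le> 2"
  shows "V = set xs" "E = cycle_edges xs"
proof -
  have f: "finite E" using sg_finE[OF s] .
  have sub: "set xs \<subseteq> V" using cyc_set_sub[OF s c] .
  have ne: "xs ! 0 \<in> set xs" using c unfolding is_cycle_def by (auto intro!: nth_mem)
  have "V \<subseteq> set xs"
    by (rule closure_all[OF cn ne]) (use sub ne cyc_closed[OF f c] d in auto)
  then show V: "V = set xs" using sub by blast
  show "E = cycle_edges xs"
  proof
    show "cycle_edges xs \<subseteq> E" using c unfolding is_cycle_def cycle_edges_def by auto
    show "E \<subseteq> cycle_edges xs"
    proof
      fix e assume e: "e \<in> E"
      then obtain a b where ab: "a \<in> V" "e = {a,b}" using sg_edge[OF s] by blast
      then obtain i where i: "i < length xs" "xs ! i = a" using V by (auto simp: in_set_conv_nth)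
      have mem: "e \<in> {e\<in>E. xs ! i \<in> e}" using e ab i by simp
      have d': "degree E (xs ! i) \<le> 2" using d i(1) by (simp)
      have "e \<in> {{xs ! i, xs ! (Suc i mod length xs)},
            {xs ! (if i = 0 then length xs - 1 else i - 1), xs ! i}}"
        using mem unfolding cyc_deg_le2[OF f c i(1) d'] .
      note t = cyc_two[OF c i(1)]
      have A: "{xs ! i, xs ! (Suc i mod length xs)} \<in> cycle_edges xs"
        unfolding cycle_edges_def by (rule CollectI, rule exI[of _ i]) (simp add: i(1))
      have B: "{xs ! (if i = 0 then length xs - 1 else i - 1), xs ! i} \<in> cycle_edges xs"
        unfolding cycle_edges_def
        by (rule CollectI, rule exI[of _ "if i = 0 then length xs - 1 else i - 1"]) (use t(4) t(5) in simp)
      show "e \<in> cycle_edges xs" using A B \<open>e \<in> {_, _}\<close> by blast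
    qed
  qed
qed

lemma cyc_edges_mem:
  assumes d: "distinct xs" and i: "i < length xs" and j: "j < length xs"
  shows "{xs ! i, xs ! j} \<in> cycle_edges xs \<longleftrightarrow>
         j = Suc i mod length xs \<or> i = Suc j mod length xs"
proof
  assume "{xs ! i, xs ! j} \<in> cycle_edges xs"
  then obtain k where k: "k < length xs" "{xs ! i, xs ! j} = {xs ! k, xs ! (Suc k mod length xs)}"
    unfolding cycle_edges_def by auto
  have L0: "0 < length xs" using k(1) by linarith
  then have k2: "Suc k mod length xs < length xs" by simp
  from k(2) have "(xs ! i = xs ! k \<and> xs ! j = xs ! (Suc k mod length xs)) \<or>
                  (xs ! i = xs ! (Suc k mod length xs) \<and> xs ! j = xs ! k)"
    by (auto simp: doubleton_eq_iff)
  then show "j = Suc i mod length xs \<or> i = Suc j mod length xs"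
    using d i j k k2 L0 by (auto simp: nth_eq_iff_index_eq)
next
  assume "j = Suc i mod length xs \<or> i = Suc j mod length xs"
  then show "{xs ! i, xs ! j} \<in> cycle_edges xs" unfolding cycle_edges_def using i j
    by (auto simp: insert_commute)
qed

lemma cyc_card_set: "is_cycle E xs \<Longrightarrow> card (set xs) = length xs"
  unfolding is_cycle_def by (simp add: distinct_card)

lemma cycle_edges_rotate:
  assumes "xs \<noteq> []"
  shows "cycle_edges (rotate k xs) = cycle_edges xs"
proof -
  let ?L = "length xs"
  have L: "?L > 0" using assms by simp
  have nr: "rotate k xs ! i = xs ! ((i + k) mod ?L)" if "i < ?L" for i
    using that by (simp add: nth_rotate add.commute)
  have key: "(Suc i mod ?L + k) mod ?L = Suc ((i + k) mod ?L) mod ?L" for i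
    by (metis add_Suc mod_Suc_eq mod_add_left_eq)
  show ?thesis
  proof
    show "cycle_edges (rotate k xs) \<subseteq> cycle_edges xs"
    proof
      fix e assume "e \<in> cycle_edges (rotate k xs)"
      then obtain i where i: "i < ?L" "e = {rotate k xs ! i, rotate k xs ! (Suc i mod ?L)}"
        unfolding cycle_edges_def by auto
      have e1: "rotate k xs ! i = xs ! ((i+k) mod ?L)" using nr i(1) .
      have e2: "rotate k xs ! (Suc i mod ?L) = xs ! (Suc ((i + k) mod ?L) mod ?L)"
        using nr[of "Suc i mod ?L"] key[of i] L by simp
      have eq: "e = {xs ! ((i+k) mod ?L), xs ! (Suc ((i + k) mod ?L) mod ?L)}"
        using i(2) e1 e2 by simp
      have lt: "(i+k) mod ?L < ?L" using L by simp
      show "e \<in> cycle_edges xs" unfolding cycle_edges_def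
        by (rule CollectI, rule exI[of _ "(i+k) mod ?L"]) (simp add: eq lt)
    qed
  next
    show "cycle_edges xs \<subseteq> cycle_edges (rotate k xs)"
    proof
      fix e assume "e \<in> cycle_edges xs"
      then obtain j where j: "j < ?L" "e = {xs ! j, xs ! (Suc j mod ?L)}"
        unfolding cycle_edges_def by auto
      define i where "i = (j + ?L - k mod ?L) mod ?L"
      have i: "i < ?L" using L unfolding i_def by simp
      have ik: "(i + k) mod ?L = j"
      proof -
        have "(i + k) mod ?L = ((j + ?L - k mod ?L) + k) mod ?L" unfolding i_def
          by (simp add: mod_add_left_eq)
        also have "\<dots> = ((j + ?L - k mod ?L) + k mod ?L) mod ?L" by (simp add: mod_add_right_eq)
        also have "\<dots> = (j + ?L) mod ?L"
        proof -
          have "k mod ?L < ?L" using L by simp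
          then have "j + ?L - k mod ?L + k mod ?L = j + ?L" by linarith
          then show ?thesis by simp
        qed
        finally show ?thesis using j by simp
      qed
      have e1: "rotate k xs ! i = xs ! j" using nr[OF i] ik by simp
      have e2: "rotate k xs ! (Suc i mod ?L) = xs ! (Suc j mod ?L)"
        using nr[of "Suc i mod ?L"] key[of i] L ik by simp
      have eq: "e = {rotate k xs ! i, rotate k xs ! (Suc i mod ?L)}"
        using j(2) e1 e2 by simp
      show "e \<in> cycle_edges (rotate k xs)" unfolding cycle_edges_def
        by (rule CollectI, rule exI[of _ i]) (simp add: eq i)
    qed
  qed
qed

lemma is_cycle_rotate:
  assumes c: "is_cycle E xs"
  shows "is_cycle E (rotate k xs)"
proof -
  have ne: "xs \<noteq> []" using c unfolding is_cycle_def by auto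
  have sub: "cycle_edges xs \<subseteq> E"
    using c unfolding is_cycle_def cycle_edges_def by auto
  have "{rotate k xs ! i, rotate k xs ! (Suc i mod length xs)} \<in> E" if "i < length xs" for i
  proof -
    have "{rotate k xs ! i, rotate k xs ! (Suc i mod length xs)} \<in> cycle_edges (rotate k xs)"
      unfolding cycle_edges_def by (rule CollectI, rule exI[of _ i]) (simp add: that)
    then show ?thesis using sub cycle_edges_rotate[OF ne] by blast
  qed
  then show ?thesis using c unfolding is_cycle_def by simp
qed


lemma dnth: "distinct xs \<Longrightarrow> i < length xs \<Longrightarrow> j < length xs \<Longrightarrow> i \<noteq> j \<Longrightarrow> xs ! i \<noteq> xs ! j"
  by (simp add: nth_eq_iff_index_eq)

lemma path_insert:
  assumes "(adj (insert {a,b} F))\<^sup>*\<^sup>* x y"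
  shows "(adj F)\<^sup>*\<^sup>* x y \<or> (((adj F)\<^sup>*\<^sup>* x a \<or> (adj F)\<^sup>*\<^sup>* x b) \<and> ((adj F)\<^sup>*\<^sup>* a y \<or> (adj F)\<^sup>*\<^sup>* b y))"
  using assms
proof (induction rule: rtranclp_induct)
  case base then show ?case by simp
next
  case (step y z)
  have "{y,z} = {a,b} \<or> adj F y z" using step(2) unfolding adj_def by simp
  then show ?case
  proof
    assume "{y,z} = {a,b}"
    then have yz: "(y = a \<and> z = b) \<or> (y = b \<and> z = a)" by (auto simp: doubleton_eq_iff)
    show ?case using step(3) yz by auto
  next
    assume a: "adj F y z"
    show ?case using step(3) rtranclp.rtrancl_into_rtrancl[of "adj F" _ y z, OF _ a] by blast
  qed
qed

lemma indep_count:
  assumes "finite F" "finite V" "\<forall>e\<in>F. \<exists>a b. e = {a,b}"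
  shows "\<exists>R \<subseteq> V. card V \<le> card R + card F \<and> (\<forall>x\<in>R. \<forall>y\<in>R. (adj F)\<^sup>*\<^sup>* x y \<longrightarrow> x = y)"
  using assms
proof (induction F rule: finite_induct)
  case empty
  have "(adj {})\<^sup>*\<^sup>* x y \<Longrightarrow> x = y" for x y :: 'a
    by (induction rule: rtranclp_induct) (auto simp: adj_def)
  then show ?case by (intro exI[of _ V]) auto
next
  case (insert e F)
  obtain a b where e: "e = {a,b}" using insert(5) by blast
  obtain R where R: "R \<subseteq> V" "card V \<le> card R + card F"
    "\<forall>x\<in>R. \<forall>y\<in>R. (adj F)\<^sup>*\<^sup>* x y \<longrightarrow> x = y" using insert by auto
  define X where "X = {x\<in>R. (adj F)\<^sup>*\<^sup>* x a}"
  have fR: "finite R" using R(1) insert(4) finite_subset by blast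
  have "card X \<le> 1"
  proof -
    have "\<forall>x\<in>X. \<forall>y\<in>X. x = y"
    proof (intro ballI)
      fix x y assume "x \<in> X" "y \<in> X"
      then have "(adj F)\<^sup>*\<^sup>* x y" "x \<in> R" "y \<in> R" unfolding X_def
        by (auto intro: rtranclp_trans rtr_sym)
      then show "x = y" using R(3) by blast
    qed
    then show ?thesis using fR unfolding X_def by (simp add: card_le_Suc0_iff_eq)
  qed
  have XR: "X \<subseteq> R" unfolding X_def by auto
  have cRX: "card (R - X) = card R - card X" using XR fR by (simp add: card_Diff_subset finite_subset)
  have cX: "card X \<le> card R" using XR fR by (simp add: card_mono)
  have cF: "card (insert e F) = card F + 1" using insert(1,2) by simp
  show ?case
  proof (intro exI[of _ "R - X"] conjI)
    show "R - X \<subseteq> V" using R(1) by blast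
    show "card V \<le> card (R - X) + card (insert e F)" using R(2) cRX cX cF \<open>card X \<le> 1\<close> by linarith
    show "\<forall>x\<in>R - X. \<forall>y\<in>R - X. (adj (insert e F))\<^sup>*\<^sup>* x y \<longrightarrow> x = y"
    proof (intro ballI impI)
      fix x y assume x: "x \<in> R - X" and y: "y \<in> R - X" and p: "(adj (insert e F))\<^sup>*\<^sup>* x y"
      have nx: "\<not> (adj F)\<^sup>*\<^sup>* x a" using x unfolding X_def by auto
      have ny: "\<not> (adj F)\<^sup>*\<^sup>* a y"
      proof
        assume "(adj F)\<^sup>*\<^sup>* a y"
        then have "(adj F)\<^sup>*\<^sup>* y a" by (rule rtr_sym)
        then show False using y unfolding X_def by auto
      qed
      from path_insert[OF p[unfolded e]]
      have "(adj F)\<^sup>*\<^sup>* x y \<or> ((adj F)\<^sup>*\<^sup>* x b \<and> (adj F)\<^sup>*\<^sup>* b y)" using nx ny by argo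
      then have "(adj F)\<^sup>*\<^sup>* x y" by (blast intro: rtranclp_trans)
      then show "x = y" using R(3) x y by blast
    qed
  qed
qed

lemma cycle_path:
  assumes c: "is_cycle E xs" and F: "F = E - {{xs ! 0, xs ! 1}}"
  shows "(adj F)\<^sup>*\<^sup>* (xs ! 1) (xs ! 0)"
proof -
  let ?L = "length xs"
  have L: "?L \<ge> 3" "distinct xs" and ed: "\<forall>i<?L. {xs ! i, xs ! (Suc i mod ?L)} \<in> E"
    using c unfolding is_cycle_def by auto
  have step: "(adj F)\<^sup>*\<^sup>* (xs ! 1) (xs ! k)" if "1 \<le> k" "k < ?L" for k
    using that
  proof (induction k)
    case 0 then show ?case by simp
  next
    case (Suc k)
    show ?case
    proof (cases "k = 0")
      case True then show ?thesis by simp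
    next
      case False
      then have ih: "(adj F)\<^sup>*\<^sup>* (xs ! 1) (xs ! k)" using Suc by simp
      have "Suc k mod ?L = Suc k" using Suc by simp
      then have "{xs ! k, xs ! Suc k} \<in> E" using ed Suc(3) by (metis Suc_lessD)
      moreover have "{xs ! k, xs ! Suc k} \<noteq> {xs ! 0, xs ! 1}"
      proof
        assume "{xs ! k, xs ! Suc k} = {xs ! 0, xs ! 1}"
        then have "xs ! k = xs ! 0 \<or> xs ! k = xs ! 1 \<and> xs ! Suc k = xs ! 0"
          by (auto simp: doubleton_eq_iff)
        moreover have "xs ! k \<noteq> xs ! 0" by (rule dnth[OF L(2)]) (use Suc(3) False in linarith)+
        moreover have "xs ! Suc k \<noteq> xs ! 0" by (rule dnth[OF L(2)]) (use Suc(3) in linarith)+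
        ultimately show False by blast
      qed
      ultimately have "adj F (xs ! k) (xs ! Suc k)" using F unfolding adj_def by simp
      then show ?thesis by (rule rtranclp.rtrancl_into_rtrancl[OF ih])
    qed
  qed
  have p1: "(adj F)\<^sup>*\<^sup>* (xs ! 1) (xs ! (?L - 1))" using step L by simp
  have "Suc (?L - 1) = ?L" using L by linarith
  then have m0: "Suc (?L - 1) mod ?L = 0" by simp
  have "?L - 1 < ?L" using L by linarith
  then have "{xs ! (?L - 1), xs ! (Suc (?L - 1) mod ?L)} \<in> E" using ed by blast
  then have "{xs ! (?L - 1), xs ! 0} \<in> E" unfolding m0 .
  moreover have "{xs ! (?L - 1), xs ! 0} \<noteq> {xs ! 0, xs ! 1}"
  proof
    assume "{xs ! (?L - 1), xs ! 0} = {xs ! 0, xs ! 1}"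
    then have "xs ! (?L - 1) = xs ! 0 \<or> xs ! (?L - 1) = xs ! 1"
      by (auto simp: doubleton_eq_iff)
    moreover have "xs ! (?L - 1) \<noteq> xs ! 0" by (rule dnth[OF L(2)]) (use L(1) in linarith)+
    moreover have "xs ! (?L - 1) \<noteq> xs ! 1" by (rule dnth[OF L(2)]) (use L(1) in linarith)+
    ultimately show False by blast
  qed
  ultimately have "adj F (xs ! (?L - 1)) (xs ! 0)" using F unfolding adj_def by simp
  then show ?thesis using p1 by (rule rtranclp.rtrancl_into_rtrancl[rotated])
qed

lemma edges_ge_vertices:
  assumes s: "simple_graph V E" and cn: "connected_graph V E" and c: "is_cycle E xs"
  shows "card V \<le> card E"
proof -
  define e0 where "e0 = {xs ! 0, xs ! 1}"
  define F where "F = E - {e0}"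
  have L3: "length xs \<ge> 3" and ed: "\<forall>i<length xs. {xs ! i, xs ! (Suc i mod length xs)} \<in> E"
    using c unfolding is_cycle_def by auto
  have l0: "0 < length xs" using L3 by linarith
  have l1: "Suc 0 mod length xs = 1" using L3 by simp
  have e0E: "e0 \<in> E" unfolding e0_def using ed l0 l1 by force
  have fE: "finite E" using sg_finE[OF s] .
  have cF: "card F = card E - 1" unfolding F_def using e0E fE by simp
  have pF: "(adj F)\<^sup>*\<^sup>* (xs ! 1) (xs ! 0)" using cycle_path[OF c] unfolding F_def e0_def by simp
  have aF: "(adj F)\<^sup>*\<^sup>* p q" if "adj E p q" for p q
  proof (cases "{p,q} = e0")
    case True
    then have "(p = xs ! 0 \<and> q = xs ! 1) \<or> (p = xs ! 1 \<and> q = xs ! 0)" unfolding e0_def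
      by (auto simp: doubleton_eq_iff)
    then show ?thesis
    proof
      assume "p = xs ! 0 \<and> q = xs ! 1"
      then show ?thesis using rtr_sym[OF pF] by simp
    next
      assume "p = xs ! 1 \<and> q = xs ! 0"
      then show ?thesis using pF by simp
    qed
  next
    case False
    then have "adj F p q" using that unfolding adj_def F_def by simp
    then show ?thesis by simp
  qed
  have conF: "(adj F)\<^sup>*\<^sup>* u v" if "u \<in> V" "v \<in> V" for u v
  proof -
    have "(adj E)\<^sup>*\<^sup>* u v" using cn that unfolding connected_graph_def by blast
    then show ?thesis using rtr_map[of "adj E" "adj F" id] aF by simp
  qed
  obtain R where R: "R \<subseteq> V" "card V \<le> card R + card F"
    "\<forall>x\<in>R. \<forall>y\<in>R. (adj F)\<^sup>*\<^sup>* x y \<longrightarrow> x = y"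
    using indep_count[of F V] fE sg_finV[OF s] sg_edge[OF s] unfolding F_def by blast
  have "card R \<le> 1"
  proof -
    have "\<forall>x\<in>R. \<forall>y\<in>R. x = y"
    proof (intro ballI)
      fix x y assume "x \<in> R" "y \<in> R"
      then show "x = y" using R(1) R(3) conF[of x y] by blast
    qed
    moreover have "finite R" using R(1) sg_finV[OF s] finite_subset by blast
    ultimately show ?thesis by (simp add: card_le_Suc0_iff_eq)
  qed
  moreover have "card E \<ge> 1"
  proof -
    have "E \<noteq> {}" using e0E by blast
    then have "0 < card E" using fE by (simp add: card_gt_0_iff)
    then show ?thesis by linarith
  qed
  ultimately show ?thesis using R(2) cF by linarith
qed


definition lam :: real where "lam = 3 * sqrt 2 - sqrt 5"
definition psi :: "nat \<Rightarrow> real" where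
  "psi d = (if d = 1 then sqrt 5 - sqrt 2 else sqrt (4 + (real d)^2) - sqrt 2)"
definition shr :: "nat \<Rightarrow> nat \<Rightarrow> real" where
  "shr p q = (if 3 \<le> p \<and> 3 \<le> q then real p / sqrt 2 else psi p)"
definition KK :: real where "KK = 3 * sqrt 13 + sqrt 5 - 8 * sqrt 2"

lemma sqrt8: "sqrt 8 = 2 * sqrt 2"
proof -
  have "sqrt 8 = sqrt (4 * 2)" by simp
  also have "\<dots> = sqrt 4 * sqrt 2" by (rule real_sqrt_mult)
  also have "sqrt 4 = 2" by (simp add: real_sqrt_eq_iff)
  finally show ?thesis .
qed

lemma psi2: "psi 2 = sqrt 2"
  unfolding psi_def using sqrt8 by simp

lemma sqrt2_pos: "sqrt 2 > 0" by simp

lemma N2: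
  assumes q: "q \<ge> (2::nat)"
  shows "sqrt (4 + (real q)^2) - sqrt (1 + (real q)^2) \<le> 2 * sqrt 2 - sqrt 5"
proof -
  define A where "A = sqrt (4 + (real q)^2)"
  define B where "B = sqrt (1 + (real q)^2)"
  have "real q \<ge> 2" using q by simp
  then have "(real q)^2 \<ge> 2^2" by (intro power_mono) auto
  then have q2: "(real q)^2 \<ge> 4" by simp
  have A8: "A \<ge> sqrt 8" unfolding A_def using q2 by simp
  have B5: "B \<ge> sqrt 5" unfolding B_def using q2 by simp
  have AA: "A * A = 4 + (real q)^2" unfolding A_def by (simp add: add_nonneg_nonneg)
  have BB: "B * B = 1 + (real q)^2" unfolding B_def by (simp add: add_nonneg_nonneg)
  have prod: "(A - B) * (A + B) = 3" using AA BB by (simp add: algebra_simps)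
  have s85: "(sqrt 8 - sqrt 5) * (sqrt 8 + sqrt 5) = 3"
    by (simp add: algebra_simps)
  have pos: "sqrt 8 - sqrt 5 \<ge> 0" by simp
  have "(sqrt 8 - sqrt 5) * (sqrt 8 + sqrt 5) \<le> (sqrt 8 - sqrt 5) * (A + B)"
    using A8 B5 pos by (intro mult_left_mono) auto
  then have "(A - B) * (A + B) \<le> (sqrt 8 - sqrt 5) * (A + B)" using prod s85 by simp
  moreover have "A + B > 0" using A8 B5 by (smt (verit) real_sqrt_gt_0_iff)
  ultimately have "A - B \<le> sqrt 8 - sqrt 5" by (simp add: mult_le_cancel_right)
  then show ?thesis unfolding A_def B_def sqrt8 .
qed

lemma N3:
  assumes "d \<ge> (2::nat)"
  shows "real d / sqrt 2 \<le> psi d"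
proof -
  have dn1: "d \<noteq> 1" using assms by simp
  have "(real d / sqrt 2 + sqrt 2)^2 = (real d)^2 / 2 + 2 * real d + 2"
    by (simp add: power2_eq_square field_simps)
  also have "\<dots> \<le> 4 + (real d)^2"
  proof -
    have "0 \<le> (real d - 2)^2" by simp
    then show ?thesis by (simp add: power2_eq_square field_simps)
  qed
  finally have "real d / sqrt 2 + sqrt 2 \<le> sqrt (4 + (real d)^2)"
    by (intro real_le_rsqrt) 
  then show ?thesis unfolding psi_def using dn1 by simp
qed

lemma edge_ineq:
  assumes p: "p \<ge> 1" and q: "q \<ge> 1" and n11: "\<not> (p = 1 \<and> q = 1)"
  shows "shr p q + shr q p \<le> sqrt ((real p)^2 + (real q)^2)"
proof -
  consider "p \<ge> 3 \<and> q \<ge> 3" | "p = 1" | "q = 1" | "p = 2" | "q = 2" using p q by linarith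
  then show ?thesis
  proof cases
    case 1
    then have "shr p q + shr q p = (real p + real q) / sqrt 2" unfolding shr_def by (simp add: add_divide_distrib)
    also have "\<dots> \<le> sqrt ((real p)^2 + (real q)^2)"
    proof (rule real_le_rsqrt)
      have "((real p + real q) / sqrt 2)^2 = (real p + real q)^2 / 2" by (simp add: power_divide)
      also have "\<dots> \<le> (real p)^2 + (real q)^2"
      proof -
        have "0 \<le> (real p - real q)^2" by simp
        then show ?thesis by (simp add: power2_eq_square field_simps)
      qed
      finally show "((real p + real q) / sqrt 2)^2 \<le> (real p)^2 + (real q)^2" .
    qed
    finally show ?thesis .
  next
    case 2
    then have q2: "q \<ge> 2" using n11 q by simp
    have "shr p q + shr q p = sqrt 5 - sqrt 2 + (sqrt (4 + (real q)^2) - sqrt 2)"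
      unfolding shr_def psi_def using 2 q2 by simp
    also have "\<dots> \<le> sqrt (1 + (real q)^2)" using N2[OF q2] by simp
    finally show ?thesis using 2 by (simp add: add.commute)
  next
    case 3
    then have p2: "p \<ge> 2" using n11 p by simp
    have "shr p q + shr q p = sqrt 5 - sqrt 2 + (sqrt (4 + (real p)^2) - sqrt 2)"
      unfolding shr_def psi_def using 3 p2 by simp
    also have "\<dots> \<le> sqrt (1 + (real p)^2)" using N2[OF p2] by simp
    finally show ?thesis using 3 by (simp add: add.commute)
  next
    case 4
    show ?thesis
    proof (cases "q = 1")
      case True
      have "shr p q + shr q p = sqrt 5 - sqrt 2 + (sqrt (4 + (real p)^2) - sqrt 2)"
        unfolding shr_def psi_def using 4 True by simp
      also have "\<dots> \<le> sqrt (1 + (real p)^2)" using N2[of p] 4 by simp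
      finally show ?thesis using True by (simp add: add.commute)
    next
      case False
      then have "shr p q + shr q p = sqrt 2 + (sqrt (4 + (real q)^2) - sqrt 2)"
        unfolding shr_def psi_def using 4 sqrt8 by simp
      then show ?thesis using 4 by simp
    qed
  next
    case 5
    show ?thesis
    proof (cases "p = 1")
      case True
      have "shr p q + shr q p = sqrt 5 - sqrt 2 + (sqrt (4 + (real q)^2) - sqrt 2)"
        unfolding shr_def psi_def using 5 True by simp
      also have "\<dots> \<le> sqrt (1 + (real q)^2)" using N2[of q] 5 by simp
      finally show ?thesis using True by simp
    next
      case False
      then have "shr p q + shr q p = (sqrt (4 + (real p)^2) - sqrt 2) + sqrt 2"
        unfolding shr_def psi_def using 5 sqrt8 by simp
      then show ?thesis using 5 by (simp add: add.commute)
    qed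
  qed
qed

lemma shr_ge: "p \<ge> 3 \<Longrightarrow> real p / sqrt 2 \<le> shr p q"
  unfolding shr_def using N3[of p] by auto

lemma shr_low: "p < 3 \<Longrightarrow> shr p q = psi p"
  unfolding shr_def by auto

lemma shr_lowq: "q < 3 \<Longrightarrow> shr p q = psi p"
  unfolding shr_def by auto

lemma sqrt_lt_help: "0 \<le> b \<Longrightarrow> a < b^2 \<Longrightarrow> sqrt a < (b::real)"
  by (metis real_sqrt_less_iff real_sqrt_abs abs_of_nonneg)

lemma sq_bounds: "sqrt 2 < 1.415" "sqrt 13 < 3.61" "sqrt 5 > 2.2" "sqrt 10 > 1" "sqrt 5 < 2.25"
  apply (rule sqrt_lt_help; simp add: power2_eq_square)
  apply (rule sqrt_lt_help; simp add: power2_eq_square)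
  apply (rule real_less_rsqrt; simp add: power2_eq_square)
  apply (rule real_less_rsqrt; simp add: power2_eq_square)
  apply (rule sqrt_lt_help; simp add: power2_eq_square)
  done

lemma N4: "KK < 2 * (sqrt 5 - sqrt 2 / 2)"
proof -
  have "(sqrt 5 + 7 * sqrt 2)^2 = 103 + 14 * (sqrt 5 * sqrt 2)"
    by (simp add: power2_eq_square algebra_simps)
  also have "sqrt 5 * sqrt 2 = sqrt 10" by (simp add: real_sqrt_mult[symmetric])
  finally have "(sqrt 5 + 7 * sqrt 2)^2 > 117" using sq_bounds(4) by simp
  moreover have "(3 * sqrt 13)^2 = 117" by (simp add: power_mult_distrib)
  ultimately have "(3 * sqrt 13)^2 < (sqrt 5 + 7 * sqrt 2)^2" by simp
  then have "3 * sqrt 13 < sqrt 5 + 7 * sqrt 2"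
    by (rule power_less_imp_less_base) simp
  then show ?thesis unfolding KK_def by simp
qed

lemma N5:
  assumes "d \<ge> (3::nat)"
  shows "real d * (real d / sqrt 2) - lam * (real d - 2) - 2 * sqrt 2 \<ge> sqrt 5 - sqrt 2 / 2"
proof -
  have s2: "sqrt 2 * sqrt 2 = 2" by simp
  have "real d * (real d / sqrt 2) = (real d)^2 * sqrt 2 / 2"
    using s2 by (simp add: power2_eq_square field_simps)
  moreover have "lam * (real d - 2) \<le> 3 * sqrt 2 * (real d - 2) - sqrt 5" 
  proof -
    have "lam * (real d - 2) = 3 * sqrt 2 * (real d - 2) - sqrt 5 * (real d - 2)" unfolding lam_def
      by (simp add: algebra_simps)
    moreover have "sqrt 5 * (real d - 2) \<ge> sqrt 5" using assms by simp
    ultimately show ?thesis by simp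
  qed
  moreover have "(real d)^2 * sqrt 2 / 2 - 3 * sqrt 2 * (real d - 2) - 2 * sqrt 2 \<ge> - sqrt 2 / 2"
  proof -
    have "(real d)^2 / 2 - 3 * (real d - 2) - 2 \<ge> - 1 / 2"
    proof -
      have "0 \<le> (real d - 3)^2" by simp
      then show ?thesis by (simp add: power2_eq_square field_simps)
    qed
    then have "sqrt 2 * ((real d)^2 / 2 - 3 * (real d - 2) - 2) \<ge> sqrt 2 * (- 1 / 2)"
      by (intro mult_left_mono) auto
    then show ?thesis by (simp add: algebra_simps)
  qed
  ultimately show ?thesis by linarith
qed

lemma Q3: "3 * psi 3 - lam * (3 - 2) - 2 * sqrt 2 = KK"
  unfolding psi_def lam_def KK_def by simp

lemma N6:
  assumes "d \<ge> (4::nat)"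
  shows "real d * psi d - lam * (real d - 2) - 2 * sqrt 2 > KK"
proof -
  have "psi d \<ge> real d - sqrt 2"
  proof -
    have "real d \<le> sqrt (4 + (real d)^2)" by (rule real_le_rsqrt) simp
    then show ?thesis unfolding psi_def using assms by simp
  qed
  then have a: "real d * psi d \<ge> real d * (real d - sqrt 2)" by (intro mult_left_mono) auto
  define c where "c = sqrt 2 + lam"
  have c8: "c < 8" unfolding c_def lam_def using sq_bounds by simp
  have "(real d - 4) * (real d + 4 - c) \<ge> 0" using assms c8 by (intro mult_nonneg_nonneg) auto
  then have b: "real d * real d - c * real d \<ge> 16 - 4 * c" by (simp add: algebra_simps)
  have "16 - 4 * c + 2 * lam - 2 * sqrt 2 > KK"
    unfolding c_def lam_def KK_def using sq_bounds by simp
  then show ?thesis using a b unfolding c_def by (simp add: algebra_simps)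
qed


definition share :: "'a set set \<Rightarrow> 'a set \<Rightarrow> 'a \<Rightarrow> real" where
  "share E e x = shr (degree E x) (sum (degree E) e - degree E x)"

definition cv :: "'a set set \<Rightarrow> 'a \<Rightarrow> real" where
  "cv E v = (\<Sum>e\<in>{e\<in>E. v \<in> e}. share E e v)"

definition rv :: "'a set set \<Rightarrow> 'a \<Rightarrow> real" where
  "rv E v = cv E v - lam * (real (degree E v) - 2) - 2 * sqrt 2"

lemma share_pair:
  assumes "a \<noteq> b"
  shows "share E {a,b} a = shr (degree E a) (degree E b)" "share E {a,b} b = shr (degree E b) (degree E a)"
  unfolding share_def using assms by simp_all

lemma SO_lower:
  assumes s: "simple_graph V E"
    and nl: "\<And>a b. {a,b} \<in> E \<Longrightarrow> \<not> (degree E a = 1 \<and> degree E b = 1)"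
  shows "(\<Sum>v\<in>V. cv E v) \<le> sombor E"
proof -
  have "(\<Sum>v\<in>V. cv E v) = (\<Sum>e\<in>E. \<Sum>x\<in>e. share E e x)"
    unfolding cv_def using double_count[OF s, of "share E"] by simp
  also have "\<dots> \<le> (\<Sum>e\<in>E. sqrt (\<Sum>x\<in>e. (real (degree E x))^2))"
  proof (rule sum_mono)
    fix e assume e: "e \<in> E"
    then obtain a b where ab: "a \<noteq> b" "e = {a,b}" using sg_edge[OF s] by blast
    have da: "degree E a \<ge> 1" using deg_pos[OF s e] ab by simp
    have db: "degree E b \<ge> 1" using deg_pos[OF s e] ab by simp
    have "(\<Sum>x\<in>e. share E e x) = shr (degree E a) (degree E b) + shr (degree E b) (degree E a)"
      using ab share_pair[OF ab(1)] by simp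
    also have "\<dots> \<le> sqrt ((real (degree E a))^2 + (real (degree E b))^2)"
      by (rule edge_ineq[OF da db nl]) (use e ab in simp)
    also have "\<dots> = sqrt (\<Sum>x\<in>e. (real (degree E x))^2)" using ab by simp
    finally show "(\<Sum>x\<in>e. share E e x) \<le> sqrt (\<Sum>x\<in>e. (real (degree E x))^2)" .
  qed
  also have "\<dots> = sombor E" unfolding sombor_def by simp
  finally show ?thesis .
qed

lemma other_deg:
  assumes s: "simple_graph V E" and e: "e \<in> E" and v: "v \<in> e"
  shows "\<exists>u. u \<noteq> v \<and> e = {v,u} \<and> sum (degree E) e - degree E v = degree E u"
proof -
  obtain a b where ab: "a \<noteq> b" "e = {a,b}" using sg_edge[OF s e] by blast
  show ?thesis
  proof (cases "v = a")
    case True then show ?thesis using ab by (intro exI[of _ b]) simp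
  next
    case False then have "v = b" using v ab by auto
    then show ?thesis using ab by (intro exI[of _ a]) (auto simp: insert_commute)
  qed
qed

lemma cv_low:
  assumes "degree E v < 3"
  shows "cv E v = real (degree E v) * psi (degree E v)"
proof -
  have "cv E v = (\<Sum>e\<in>{e\<in>E. v \<in> e}. psi (degree E v))"
    unfolding cv_def share_def using assms by (intro sum.cong) (auto simp: shr_low)
  then show ?thesis unfolding degree_def by simp
qed

lemma cv_iso:
  assumes s: "simple_graph V E" and "\<And>u. {v,u} \<in> E \<Longrightarrow> degree E u < 3"
  shows "cv E v = real (degree E v) * psi (degree E v)"
proof -
  have "cv E v = (\<Sum>e\<in>{e\<in>E. v \<in> e}. psi (degree E v))"
    unfolding cv_def
  proof (intro sum.cong refl)
    fix e assume "e \<in> {e\<in>E. v \<in> e}"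
    then obtain u where u: "u \<noteq> v" "e = {v,u}" "sum (degree E) e - degree E v = degree E u" "e \<in> E"
      using other_deg[OF s] by blast
    then have "degree E u < 3" using assms(2) by simp
    then show "share E e v = psi (degree E v)" unfolding share_def using u(3) by (simp add: shr_lowq)
  qed
  then show ?thesis unfolding degree_def by simp
qed

lemma cv_high:
  assumes "degree E v \<ge> 3"
  shows "cv E v \<ge> real (degree E v) * (real (degree E v) / sqrt 2)"
proof -
  have "(\<Sum>e\<in>{e\<in>E. v \<in> e}. real (degree E v) / sqrt 2) \<le> cv E v"
    unfolding cv_def share_def using assms by (intro sum_mono) (simp add: shr_ge)
  then show ?thesis unfolding degree_def by simp
qed

lemma rv_low:
  assumes "degree E v = 1 \<or> degree E v = 2"
  shows "rv E v = 0"
  using assms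
proof
  assume d: "degree E v = 1"
  show ?thesis unfolding rv_def using cv_low[of E v] d unfolding psi_def lam_def by simp
next
  assume d: "degree E v = 2"
  show ?thesis unfolding rv_def using cv_low[of E v] d psi2 by simp
qed

lemma rv_high:
  assumes "degree E v \<ge> 3"
  shows "rv E v \<ge> sqrt 5 - sqrt 2 / 2"
  using cv_high[OF assms] N5[OF assms] unfolding rv_def by linarith

lemma rv_iso:
  assumes s: "simple_graph V E" and "\<And>u. {v,u} \<in> E \<Longrightarrow> degree E u < 3" and "degree E v \<ge> 3"
  shows "rv E v \<ge> KK" "degree E v \<ge> 4 \<Longrightarrow> rv E v > KK"
proof -
  have c: "cv E v = real (degree E v) * psi (degree E v)" by (rule cv_iso[OF s assms(2)])
  show "degree E v \<ge> 4 \<Longrightarrow> rv E v > KK" unfolding rv_def c using N6 by simp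
  show "rv E v \<ge> KK"
  proof (cases "degree E v = 3")
    case True then show ?thesis unfolding rv_def c using Q3 by simp
  next
    case False then have "degree E v \<ge> 4" using assms(3) by simp
    then show ?thesis unfolding rv_def c using N6 by (simp add: less_imp_le)
  qed
qed

lemma main_ineq:
  assumes s: "simple_graph V E"
    and nl: "\<And>a b. {a,b} \<in> E \<Longrightarrow> \<not> (degree E a = 1 \<and> degree E b = 1)"
  shows "2 * sqrt 2 * real (card V) + lam * (2 * real (card E) - 2 * real (card V)) + (\<Sum>v\<in>V. rv E v)
         \<le> sombor E"
proof -
  have "(\<Sum>v\<in>V. cv E v) = (\<Sum>v\<in>V. rv E v + lam * (real (degree E v) - 2) + 2 * sqrt 2)"
    unfolding rv_def by simp
  also have "\<dots> = (\<Sum>v\<in>V. rv E v) + lam * ((\<Sum>v\<in>V. real (degree E v)) - 2 * real (card V))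
      + 2 * sqrt 2 * real (card V)"
    by (simp add: sum.distrib sum_subtractf sum_distrib_left algebra_simps)
  also have "(\<Sum>v\<in>V. real (degree E v)) = 2 * real (card E)"
    using handshake[OF s] by (metis of_nat_mult of_nat_numeral of_nat_sum)
  finally have "(\<Sum>v\<in>V. cv E v) = 2 * sqrt 2 * real (card V) + lam * (2 * real (card E) - 2 * real (card V)) + (\<Sum>v\<in>V. rv E v)"
    by simp
  then show ?thesis using SO_lower[OF s nl] by simp
qed


definition tadj :: "nat \<Rightarrow> nat \<Rightarrow> nat \<Rightarrow> nat \<Rightarrow> bool" where
  "tadj g N i j \<longleftrightarrow> (Suc i < g \<and> j = Suc i) \<or> (i = g - 1 \<and> j = 0) \<or> (i = 0 \<and> j = g)
     \<or> (g \<le> i \<and> Suc i < N \<and> j = Suc i)"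

lemma tad_mem: "{i,j} \<in> tadpole_E g N \<longleftrightarrow> tadj g N i j \<or> tadj g N j i"
  unfolding tadpole_E_def tadj_def by (auto simp: doubleton_eq_iff)

lemma tadj_cyc:
  assumes "g \<ge> 3" "i < g" "j < g"
  shows "tadj g N i j \<longleftrightarrow> j = Suc i mod g"
proof (cases "Suc i < g")
  case True
  then have "Suc i mod g = Suc i" by simp
  then show ?thesis using assms True unfolding tadj_def by auto
next
  case False
  then have "Suc i = g" using assms by simp
  then have "Suc i mod g = 0" "i = g - 1" by auto
  then show ?thesis using assms False unfolding tadj_def by auto
qed

lemma TL1:
  assumes "g \<ge> 3" "i < g" "j < g"
  shows "{i,j} \<in> tadpole_E g N \<longleftrightarrow> j = Suc i mod g \<or> i = Suc j mod g"
  unfolding tad_mem using tadj_cyc[OF assms] tadj_cyc[OF assms(1,3,2)] by simp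

lemma TL2:
  assumes "g \<ge> 3" "j < g" "N \<le> Suc g"
  shows "{g,j} \<in> tadpole_E g N \<longleftrightarrow> j = 0"
  unfolding tad_mem tadj_def using assms by auto

lemma TL3:
  assumes "g \<ge> 3" "N \<ge> g + 2" "i < N - 1"
  shows "{N - 1, i} \<in> tadpole_E g N \<longleftrightarrow> i = N - 2"
  unfolding tad_mem tadj_def using assms by auto

lemma TL4:
  assumes "g \<ge> 3"
  shows "{i} \<notin> tadpole_E g N"
  using tad_mem[of i i g N] assms unfolding tadj_def by auto

lemma TL5:
  assumes "i < N - 1" "j < N - 1"
  shows "{i,j} \<in> tadpole_E g N \<longleftrightarrow> {i,j} \<in> tadpole_E g (N - 1)"
  unfolding tad_mem tadj_def using assms by auto


lemma leaf_sg:
  assumes s: "simple_graph V E" and d: "degree E l = 1" and e: "{l,u} \<in> E"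
  shows "simple_graph (V - {l}) (E - {{l,u}})"
  unfolding simple_graph_def
proof (intro conjI ballI)
  show "finite (V - {l})" using sg_finV[OF s] by simp
  fix e assume e': "e \<in> E - {{l,u}}"
  then obtain a b where ab: "a \<noteq> b" "a \<in> V" "b \<in> V" "e = {a,b}" using sg_edge[OF s] by blast
  have "l \<notin> e" using e' deg1_edges[OF s d e] by blast
  then show "\<exists>a b. a \<noteq> b \<and> a \<in> V - {l} \<and> b \<in> V - {l} \<and> e = {a, b}" using ab by blast
qed

lemma leaf_deg:
  assumes s: "simple_graph V E" and e: "{l,u} \<in> E"
  shows "degree (E - {{l,u}}) x = (if x \<in> {l,u} then degree E x - 1 else degree E x)"
proof -
  have eq: "{e\<in>E - {{l,u}}. x \<in> e} = {e\<in>E. x \<in> e} - {{l,u}}" by blast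
  have f: "finite {e\<in>E. x \<in> e}" using sg_finE[OF s] by simp
  show ?thesis unfolding degree_def eq using f e by (auto simp: card_Diff_singleton)
qed

lemma leaf_conn:
  assumes s: "simple_graph V E" and c: "connected_graph V E" and d: "degree E l = 1"
    and e: "{l,u} \<in> E" and ul: "u \<noteq> l" and uV: "u \<in> V"
  shows "connected_graph (V - {l}) (E - {{l,u}})"
  unfolding connected_graph_def
proof (intro conjI ballI)
  show "V - {l} \<noteq> {}" using ul uV by blast
  fix x y assume x: "x \<in> V - {l}" and y: "y \<in> V - {l}"
  define h where "h = (\<lambda>z. if z = l then u else z)"
  have st: "(adj (E - {{l,u}}))\<^sup>*\<^sup>* (h a) (h b)" if "adj E a b" for a b
  proof -
    consider "a = l" | "b = l" | "a \<noteq> l \<and> b \<noteq> l" by blast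
    then show ?thesis
    proof cases
      case 1
      then have "b = u" using deg1_adj[OF s d e] that by simp
      then show ?thesis using 1 ul unfolding h_def by simp
    next
      case 2
      then have "a = u" using deg1_adj[OF s d e] adj_sym[OF that] by simp
      then show ?thesis using 2 ul unfolding h_def by simp
    next
      case 3
      then have "{a,b} \<noteq> {l,u}" by (auto simp: doubleton_eq_iff)
      then have "adj (E - {{l,u}}) a b" using that unfolding adj_def by simp
      then show ?thesis using 3 unfolding h_def by simp
    qed
  qed
  have "(adj E)\<^sup>*\<^sup>* x y" using c x y unfolding connected_graph_def by blast
  then have "(adj (E - {{l,u}}))\<^sup>*\<^sup>* (h x) (h y)" by (rule rtr_map[rotated]) (rule st)
  then show "(adj (E - {{l,u}}))\<^sup>*\<^sup>* x y" using x y unfolding h_def by simp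
qed

lemma leaf_cycle:
  assumes s: "simple_graph V E" and d: "degree E l = 1" and e: "{l,u} \<in> E"
    and c: "is_cycle E ys"
  shows "is_cycle (E - {{l,u}}) ys" "l \<notin> set ys"
proof -
  show nl: "l \<notin> set ys" using cyc_deg2[OF sg_finE[OF s] c] d by force
  show "is_cycle (E - {{l,u}}) ys"
    unfolding is_cycle_def
  proof (intro conjI allI impI)
    show "length ys \<ge> 3" "distinct ys" using c unfolding is_cycle_def by auto
    fix i assume i: "i < length ys"
    have "{ys ! i, ys ! ((i + 1) mod length ys)} \<in> E" using c i unfolding is_cycle_def by blast
    moreover have "ys ! i \<noteq> l" using nl i by (metis nth_mem)
    moreover have "ys ! ((i + 1) mod length ys) \<noteq> l" using nl i
      by (metis nth_mem mod_less_divisor gr_implies_not0 neq0_conv)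
    ultimately show "{ys ! i, ys ! ((i + 1) mod length ys)} \<in> E - {{l,u}}"
      by (auto simp: doubleton_eq_iff)
  qed
qed

lemma leaf_nbr:
  assumes s: "simple_graph V E" and d: "degree E l = 1" and e: "{l,u} \<in> E" and ul: "u \<noteq> l"
  shows "{l,x} \<in> E \<longleftrightarrow> x = u"
proof
  assume "{l,x} \<in> E"
  then show "x = u" using deg1_adj[OF s d e] unfolding adj_def by simp
qed (use e in simp)


lemma tad_structure:
  assumes "simple_graph V E" "connected_graph V E" "is_cycle E xs" "card V = n"
    "length xs + 1 \<le> n" "w \<in> V" "l \<in> V" "degree E w = 3" "degree E l = 1"
    "\<forall>v\<in>V. v \<noteq> w \<longrightarrow> v \<noteq> l \<longrightarrow> degree E v = 2"
  shows "(\<exists>h. bij_betw h {0..<n} V \<and> h (n - 1) = l \<and>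
            (\<forall>i<n. \<forall>j<n. ({h i, h j} \<in> E \<longleftrightarrow> {i,j} \<in> tadpole_E (length xs) n))) \<and>
         (\<forall>ys. is_cycle E ys \<longrightarrow> set ys = set xs \<and> cycle_edges ys = cycle_edges xs)"
  using assms
proof (induction n arbitrary: V E l)
  case 0 then show ?case by simp
next
  case (Suc n)
  note s = Suc.prems(1) and cn = Suc.prems(2) and c = Suc.prems(3) and cV = Suc.prems(4)
    and Ln = Suc.prems(5) and wV = Suc.prems(6) and lV = Suc.prems(7) and dw = Suc.prems(8)
    and dl = Suc.prems(9) and dv = Suc.prems(10)
  let ?g = "length xs"
  have g3: "?g \<ge> 3" and dxs: "distinct xs" using c unfolding is_cycle_def by auto
  obtain u where u: "{l,u} \<in> E" "u \<noteq> l" "u \<in> V" using deg_ge1_ex[OF s] dl by force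
  define E' where "E' = E - {{l,u}}"
  define V' where "V' = V - {l}"
  have s': "simple_graph V' E'" unfolding V'_def E'_def by (rule leaf_sg[OF s dl u(1)])
  have cn': "connected_graph V' E'" unfolding V'_def E'_def by (rule leaf_conn[OF s cn dl u])
  have c': "is_cycle E' xs" and lxs: "l \<notin> set xs" unfolding E'_def using leaf_cycle[OF s dl u(1) c] by auto
  have fV: "finite V" using sg_finV[OF s] .
  have cV': "card V' = n" unfolding V'_def using cV lV fV by simp
  have deg': "degree E' x = (if x \<in> {l,u} then degree E x - 1 else degree E x)" for x
    unfolding E'_def by (rule leaf_deg[OF s u(1)])
  have wl: "w \<noteq> l" using dw dl by auto
  have cyc_tr: "is_cycle E' ys" if "is_cycle E ys" for ys
    unfolding E'_def using leaf_cycle[OF s dl u(1) that] by auto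
  have sE: "E = insert {l,u} E'" unfolding E'_def using u(1) by blast
  have lnb: "{l,x} \<in> E \<longleftrightarrow> x = u" for x by (rule leaf_nbr[OF s dl u(1) u(2)])
  have lE': "{x,l} \<notin> E'" for x
  proof
    assume "{x,l} \<in> E'"
    then have "{x,l} \<subseteq> V'" using sg_sub[OF s'] by blast
    then show False unfolding V'_def by blast
  qed
  have wV': "w \<in> V'" unfolding V'_def using wV wl by blast
  have uV': "u \<in> V'" unfolding V'_def using u by blast
  have l2: "{l} \<notin> E" using sg_card2[OF s, of "{l}"] by auto
  show ?case
  proof (cases "u = w")
    case True
    have d2all: "\<forall>x\<in>V'. degree E' x = 2"
    proof
      fix x assume x: "x \<in> V'"
      show "degree E' x = 2"
      proof (cases "x = w")
        case True then show ?thesis using deg' dw \<open>u = w\<close> by simp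
      next
        case False then show ?thesis using deg' dv x \<open>u = w\<close> unfolding V'_def by simp
      qed
    qed
    have sub: "set xs \<subseteq> V'" using cyc_set_sub[OF s' c'] .
    have "\<forall>x\<in>set xs. degree E' x \<le> 2" using d2all sub by auto
    note tr = two_reg[OF s' cn' c' this]
    have gn: "?g = n" using cyc_card_set[OF c] tr(1) cV' by simp
    obtain k where k: "k < ?g" "xs ! k = w" using wV' tr(1) by (metis in_set_conv_nth)
    define zs where "zs = rotate k xs"
    have xne: "xs \<noteq> []" using g3 by auto
    have zs0: "zs ! 0 = w" unfolding zs_def using k xne by (simp add: nth_rotate)
    have zd: "distinct zs" unfolding zs_def using dxs by simp
    have zlen: "length zs = n" unfolding zs_def using gn by simp
    have zset: "set zs = V'" unfolding zs_def using tr(1) by simp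
    have zE: "cycle_edges zs = E'" unfolding zs_def using tr(2) cycle_edges_rotate[OF xne] by simp
    define h where "h = (\<lambda>i. if i < n then zs ! i else l)"
    have lzs: "l \<notin> set zs" using zset unfolding V'_def by blast
    have inj: "inj_on h {0..<Suc n}"
    proof (rule inj_onI)
      fix i j assume i: "i \<in> {0..<Suc n}" and j: "j \<in> {0..<Suc n}" and hij: "h i = h j"
      show "i = j"
      proof (cases "i < n"; cases "j < n")
        assume "i < n" "j < n"
        then show "i = j" using hij zd zlen unfolding h_def by (simp add: nth_eq_iff_index_eq)
      next
        assume "i < n" "\<not> j < n"
        then have "zs ! i = l" using hij unfolding h_def by simp
        then show "i = j" using lzs \<open>i < n\<close> zlen by (metis nth_mem)
      next
        assume "\<not> i < n" "j < n"
        then have "zs ! j = l" using hij unfolding h_def by simp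
        then show "i = j" using lzs \<open>j < n\<close> zlen by (metis nth_mem)
      next
        assume "\<not> i < n" "\<not> j < n"
        then show "i = j" using i j by simp
      qed
    qed
    have img: "h ` {0..<Suc n} = V"
    proof -
      have e1: "{0..<Suc n} = insert n {0..<n}" by auto
      have hn: "h n = l" unfolding h_def by simp
      have "h ` {0..<Suc n} = insert l (h ` {0..<n})" unfolding e1 image_insert hn ..
      also have "h ` {0..<n} = (\<lambda>i. zs ! i) ` {0..<n}" unfolding h_def by (rule image_cong) auto
      also have "\<dots> = set zs" unfolding set_conv_nth using zlen by auto
      also have "insert l (set zs) = V" using zset lV unfolding V'_def by auto
      finally show ?thesis .
    qed
    have adj: "{h i, h j} \<in> E \<longleftrightarrow> {i,j} \<in> tadpole_E ?g (Suc n)" if i: "i < Suc n" and j: "j < Suc n" for i j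
    proof -
      have zin: "zs ! m \<in> set zs" if "m < n" for m using that zlen by simp
      have cyc_case: "{zs ! a, zs ! b} \<in> E \<longleftrightarrow> {a,b} \<in> tadpole_E ?g (Suc n)" if "a < n" "b < n" for a b
      proof -
        have "{zs ! a, zs ! b} \<noteq> {l,u}" using zin[OF that(1)] zin[OF that(2)] lzs by (auto simp: doubleton_eq_iff)
        then have "{zs ! a, zs ! b} \<in> E \<longleftrightarrow> {zs ! a, zs ! b} \<in> cycle_edges zs" using sE zE by simp
        also have "\<dots> \<longleftrightarrow> b = Suc a mod n \<or> a = Suc b mod n" using cyc_edges_mem[OF zd] that zlen by simp
        also have "\<dots> \<longleftrightarrow> {a,b} \<in> tadpole_E ?g (Suc n)" using TL1[OF g3, of a b] that gn by simp
        finally show ?thesis .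
      qed
      have att_case: "{l, zs ! b} \<in> E \<longleftrightarrow> {n, b} \<in> tadpole_E ?g (Suc n)" if "b < n" for b
      proof -
        have "{l, zs ! b} \<in> E \<longleftrightarrow> zs ! b = w" using lnb \<open>u = w\<close> by simp
        also have "\<dots> \<longleftrightarrow> b = 0" using zs0 zd zlen that nth_eq_iff_index_eq[OF zd, of b 0] by auto
        also have "\<dots> \<longleftrightarrow> {n, b} \<in> tadpole_E ?g (Suc n)" using TL2[OF g3, of b "Suc n"] that gn by simp
        finally show ?thesis .
      qed
      show ?thesis
      proof (cases "i < n"; cases "j < n")
        assume "i < n" "j < n" then show ?thesis using cyc_case unfolding h_def by simp
      next
        assume "i < n" "\<not> j < n"
        then have "j = n" using j by simp
        then show ?thesis using att_case[OF \<open>i < n\<close>] \<open>i < n\<close> unfolding h_def by (simp add: insert_commute)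
      next
        assume "\<not> i < n" "j < n"
        then have "i = n" using i by simp
        then show ?thesis using att_case[OF \<open>j < n\<close>] \<open>j < n\<close> unfolding h_def by simp
      next
        assume "\<not> i < n" "\<not> j < n"
        then have "i = n" "j = n" using i j by auto
        then show ?thesis using l2 TL4[OF g3] unfolding h_def by simp
      qed
    qed
    have cycs: "set ys = set xs \<and> cycle_edges ys = cycle_edges xs" if "is_cycle E ys" for ys
    proof -
      have cy': "is_cycle E' ys" using cyc_tr[OF that] .
      have "set ys \<subseteq> V'" using cyc_set_sub[OF s' cy'] .
      then have "\<forall>x\<in>set ys. degree E' x \<le> 2" using d2all by auto
      note ty = two_reg[OF s' cn' cy' this]
      show ?thesis using ty tr by simp
    qed
    show ?thesis
      using bij_betw_imageI[OF inj img] adj cycs unfolding h_def by auto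
  next
    case False
    have du': "degree E' u = 1" using deg' dv u False by simp
    have dw': "degree E' w = 3" using deg' dw False wl by simp
    have dv': "\<forall>v\<in>V'. v \<noteq> w \<longrightarrow> v \<noteq> u \<longrightarrow> degree E' v = 2"
      using deg' dv unfolding V'_def by simp
    have Ln': "?g + 1 \<le> n"
    proof (rule ccontr)
      assume "\<not> ?g + 1 \<le> n"
      then have "n \<le> ?g" by simp
      have sub: "set xs \<subseteq> V'" using cyc_set_sub[OF s' c'] .
      have "card (set xs) = ?g" using cyc_card_set[OF c] .
      then have "set xs = V'" using sub cV' \<open>n \<le> ?g\<close> fV unfolding V'_def
        by (metis card_mono card_subset_eq finite_Diff le_antisym)
      then have "u \<in> set xs" using uV' by simp
      then have "degree E' u \<ge> 2" using cyc_deg2[OF sg_finE[OF s'] c'] by simp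
      then show False using du' by simp
    qed
    have IH: "(\<exists>h. bij_betw h {0..<n} V' \<and> h (n - 1) = u \<and>
            (\<forall>i<n. \<forall>j<n. ({h i, h j} \<in> E' \<longleftrightarrow> {i,j} \<in> tadpole_E ?g n))) \<and>
         (\<forall>ys. is_cycle E' ys \<longrightarrow> set ys = set xs \<and> cycle_edges ys = cycle_edges xs)"
      by (rule Suc.IH[OF s' cn' c' cV' Ln' wV' uV' dw' du' dv'])
    then obtain h' where h': "bij_betw h' {0..<n} V'" "h' (n - 1) = u"
      "\<forall>i<n. \<forall>j<n. ({h' i, h' j} \<in> E' \<longleftrightarrow> {i,j} \<in> tadpole_E ?g n)" by blast
    have cyc': "\<forall>ys. is_cycle E' ys \<longrightarrow> set ys = set xs \<and> cycle_edges ys = cycle_edges xs" using IH by blast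
    define h where "h = h'(n := l)"
    have h'V: "h' i \<in> V'" if "i < n" for i using h'(1) that unfolding bij_betw_def by auto
    have inj: "inj_on h {0..<Suc n}"
    proof (rule inj_onI)
      fix i j assume i: "i \<in> {0..<Suc n}" and j: "j \<in> {0..<Suc n}" and hij: "h i = h j"
      show "i = j"
      proof (cases "i < n"; cases "j < n")
        assume "i < n" "j < n"
        then show "i = j" using hij h'(1) unfolding h_def bij_betw_def inj_on_def by simp
      next
        assume "i < n" "\<not> j < n"
        then have "h' i = l" using hij j unfolding h_def by simp
        then show "i = j" using h'V[OF \<open>i < n\<close>] unfolding V'_def by simp
      next
        assume "\<not> i < n" "j < n"
        then have "h' j = l" using hij i unfolding h_def by simp
        then show "i = j" using h'V[OF \<open>j < n\<close>] unfolding V'_def by simp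
      next
        assume "\<not> i < n" "\<not> j < n"
        then show "i = j" using i j by simp
      qed
    qed
    have img: "h ` {0..<Suc n} = V"
    proof -
      have e1: "{0..<Suc n} = insert n {0..<n}" by auto
      have hn: "h n = l" unfolding h_def by simp
      have "h ` {0..<Suc n} = insert l (h ` {0..<n})" unfolding e1 image_insert hn ..
      also have "h ` {0..<n} = h' ` {0..<n}" unfolding h_def by (rule image_cong) auto
      also have "\<dots> = V'" using h'(1) unfolding bij_betw_def by simp
      also have "insert l V' = V" using lV unfolding V'_def by auto
      finally show ?thesis .
    qed
    have n1: "n \<ge> 1" using Ln' by simp
    have adj: "{h i, h j} \<in> E \<longleftrightarrow> {i,j} \<in> tadpole_E ?g (Suc n)" if i: "i < Suc n" and j: "j < Suc n" for i j
    proof -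
      have in_case: "{h' a, h' b} \<in> E \<longleftrightarrow> {a,b} \<in> tadpole_E ?g (Suc n)" if "a < n" "b < n" for a b
      proof -
        have "{h' a, h' b} \<noteq> {l,u}" using h'V[OF that(1)] h'V[OF that(2)] unfolding V'_def
          by (auto simp: doubleton_eq_iff)
        then have "{h' a, h' b} \<in> E \<longleftrightarrow> {h' a, h' b} \<in> E'" using sE by simp
        also have "\<dots> \<longleftrightarrow> {a,b} \<in> tadpole_E ?g n" using h'(3) that by blast
        also have "\<dots> \<longleftrightarrow> {a,b} \<in> tadpole_E ?g (Suc n)" using TL5[of a "Suc n" b ?g] that by simp
        finally show ?thesis .
      qed
      have att_case: "{l, h' b} \<in> E \<longleftrightarrow> {n, b} \<in> tadpole_E ?g (Suc n)" if "b < n" for b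
      proof -
        have "{l, h' b} \<in> E \<longleftrightarrow> h' b = u" using lnb by simp
        also have "\<dots> \<longleftrightarrow> b = n - 1"
        proof
          assume "h' b = u"
          then have "h' b = h' (n - 1)" using h'(2) by simp
          then show "b = n - 1" using h'(1) that n1 unfolding bij_betw_def inj_on_def by simp
        qed (use h'(2) in simp)
        also have "\<dots> \<longleftrightarrow> {Suc n - 1, b} \<in> tadpole_E ?g (Suc n)" using TL3[OF g3, of "Suc n" b] that Ln' by simp
        finally show ?thesis by simp
      qed
      show ?thesis
      proof (cases "i < n"; cases "j < n")
        assume "i < n" "j < n" then show ?thesis using in_case unfolding h_def by simp
      next
        assume "i < n" "\<not> j < n"
        then have "j = n" using j by simp
        then show ?thesis using att_case[OF \<open>i < n\<close>] \<open>i < n\<close> unfolding h_def by (simp add: insert_commute)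
      next
        assume "\<not> i < n" "j < n"
        then have "i = n" using i by simp
        then show ?thesis using att_case[OF \<open>j < n\<close>] \<open>j < n\<close> unfolding h_def by simp
      next
        assume "\<not> i < n" "\<not> j < n"
        then have "i = n" "j = n" using i j by auto
        then show ?thesis using l2 TL4[OF g3] unfolding h_def by simp
      qed
    qed
    show ?thesis
      using bij_betw_imageI[OF inj img] adj cyc' cyc_tr unfolding h_def by auto
  qed
qed


context
  fixes g n :: nat
  assumes g3: "g \<ge> 3" and ng: "n \<ge> g + 2"
begin

lemma tsg: "simple_graph {0..<n} (tadpole_E g n)"
  unfolding simple_graph_def
proof (intro conjI ballI)
  show "finite {0..<n}" by simp
  fix e assume e: "e \<in> tadpole_E g n"
  have "\<exists>a b. e = {a,b}" using e unfolding tadpole_E_def by blast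
  then obtain a b where ab: "e = {a,b}" by blast
  then have "tadj g n a b \<or> tadj g n b a" using e tad_mem by simp
  then have "a \<noteq> b \<and> a \<in> {0..<n} \<and> b \<in> {0..<n}" using g3 ng unfolding tadj_def by auto
  then show "\<exists>a b. a \<noteq> b \<and> a \<in> {0..<n} \<and> b \<in> {0..<n} \<and> e = {a, b}" using ab by blast
qed

lemma tnbr: "i < n \<Longrightarrow> degree (tadpole_E g n) i = card {j. j < n \<and> (tadj g n i j \<or> tadj g n j i)}"
  using deg_nbrs[OF tsg, of i] unfolding tad_mem by simp

lemma tdeg0: "degree (tadpole_E g n) 0 = 3"
proof -
  have "{j. j < n \<and> (tadj g n 0 j \<or> tadj g n j 0)} = {1, g - 1, g}"
    using g3 ng unfolding tadj_def by auto
  then show ?thesis using tnbr[of 0] g3 ng by simp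
qed

lemma tdeg_last: "degree (tadpole_E g n) (n - 1) = 1"
proof -
  have "{j. j < n \<and> (tadj g n (n - 1) j \<or> tadj g n j (n - 1))} = {n - 2}"
    using g3 ng unfolding tadj_def by auto
  then show ?thesis using tnbr[of "n - 1"] g3 ng by simp
qed

lemma tdeg_mid:
  assumes "0 < i" "i < n - 1"
  shows "degree (tadpole_E g n) i = 2"
proof -
  consider "i < g - 1" | "i = g - 1" | "i = g" | "g < i" by linarith
  then show ?thesis
  proof cases
    case 1
    then have "{j. j < n \<and> (tadj g n i j \<or> tadj g n j i)} = {i - 1, i + 1}"
      using g3 ng assms unfolding tadj_def by auto
    then show ?thesis using tnbr[of i] assms by simp
  next
    case 2
    then have "{j. j < n \<and> (tadj g n i j \<or> tadj g n j i)} = {0, g - 2}"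
      using g3 ng assms unfolding tadj_def by auto
    then show ?thesis using tnbr[of i] assms g3 by simp
  next
    case 3
    then have "{j. j < n \<and> (tadj g n i j \<or> tadj g n j i)} = {0, g + 1}"
      using g3 ng assms unfolding tadj_def by auto
    then show ?thesis using tnbr[of i] assms g3 by simp
  next
    case 4
    then have "{j. j < n \<and> (tadj g n i j \<or> tadj g n j i)} = {i - 1, i + 1}"
      using g3 ng assms unfolding tadj_def by auto
    then show ?thesis using tnbr[of i] assms by simp
  qed
qed

lemma tcycle: "is_cycle (tadpole_E g n) [0..<g]"
  unfolding is_cycle_def
proof (intro conjI allI impI)
  show "length [0..<g] \<ge> 3" "distinct [0..<g]" using g3 by auto
  fix i assume i: "i < length [0..<g]"
  then have "{i, Suc i mod g} \<in> tadpole_E g n" using TL1[OF g3, of i "Suc i mod g"] g3 by simp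
  then show "{[0..<g] ! i, [0..<g] ! ((i + 1) mod length [0..<g])} \<in> tadpole_E g n"
    using i g3 by simp
qed

lemma tconn: "connected_graph {0..<n} (tadpole_E g n)"
proof -
  have step: "adj (tadpole_E g n) i (Suc i)" if "Suc i < n" "i \<noteq> g - 1" for i
  proof (cases "i < g")
    case True
    then have "Suc i < g" using that by linarith
    then show ?thesis unfolding adj_def tad_mem tadj_def by simp
  next
    case False
    show ?thesis
    proof (cases "i = g")
      case True
      then show ?thesis unfolding adj_def tad_mem tadj_def using that by simp
    next
      case False
      then show ?thesis unfolding adj_def tad_mem tadj_def using that \<open>\<not> i < g\<close> by simp
    qed
  qed
  have a0g: "adj (tadpole_E g n) 0 g" unfolding adj_def tad_mem tadj_def by simp
  have to0: "(adj (tadpole_E g n))\<^sup>*\<^sup>* 0 i" if "i < n" for i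
    using that
  proof (induction i)
    case 0 then show ?case by simp
  next
    case (Suc i)
    show ?case
    proof (cases "i = g - 1")
      case True
      then have "Suc i = g" using g3 by simp
      then show ?thesis using a0g by simp
    next
      case False
      then show ?thesis using Suc step[of i] by (meson Suc_lessD rtranclp.rtrancl_into_rtrancl)
    qed
  qed
  show ?thesis unfolding connected_graph_def
  proof (intro conjI ballI)
    show "{0..<n} \<noteq> {}" using ng by simp
    fix u v assume "u \<in> {0..<n}" "v \<in> {0..<n}"
    then show "(adj (tadpole_E g n))\<^sup>*\<^sup>* u v" using to0 rtr_sym by (meson atLeastLessThan_iff rtranclp_trans)
  qed
qed

end


context
  fixes g n :: nat
  assumes g3: "g \<ge> 3" and ng: "n \<ge> g + 2"
begin

definition ed :: "nat \<Rightarrow> nat set" where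
  "ed k = (if Suc k < g then {k, Suc k} else if k = g - 1 then {g - 1, 0} else if k = g then {0, g} else {k - 1, k})"

lemma ed_img: "tadpole_E g n = ed ` {0..<n}"
proof
  show "tadpole_E g n \<subseteq> ed ` {0..<n}"
  proof
    fix e assume "e \<in> tadpole_E g n"
    then consider (a) i where "e = {i, Suc i}" "Suc i < g" | (b) "e = {g - 1, 0}" | (c) "e = {0, g}"
      | (d) i where "e = {i, Suc i}" "g \<le> i" "Suc i < n"
      unfolding tadpole_E_def by blast
    then show "e \<in> ed ` {0..<n}"
    proof cases
      case (a i) then show ?thesis using ng unfolding ed_def by (intro image_eqI[of _ _ i]) auto
    next
      case b then show ?thesis using ng g3 unfolding ed_def by (intro image_eqI[of _ _ "g - 1"]) auto
    next
      case c then show ?thesis using ng g3 unfolding ed_def by (intro image_eqI[of _ _ g]) auto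
    next
      case (d i) then show ?thesis using ng g3 unfolding ed_def by (intro image_eqI[of _ _ "Suc i"]) auto
    qed
  qed
next
  show "ed ` {0..<n} \<subseteq> tadpole_E g n"
  proof
    fix e assume "e \<in> ed ` {0..<n}"
    then obtain k where k: "k < n" "e = ed k" by auto
    show "e \<in> tadpole_E g n"
    proof (cases "Suc k < g")
      case True then show ?thesis using k unfolding ed_def tadpole_E_def by auto
    next
      case False
      show ?thesis
      proof (cases "k = g - 1")
        case True then show ?thesis using k False unfolding ed_def tadpole_E_def by auto
      next
        case F2: False
        show ?thesis
        proof (cases "k = g")
          case True then show ?thesis using k False F2 unfolding ed_def tadpole_E_def by auto
        next
          case F3: False
          then have "g \<le> k - 1" "Suc (k - 1) = k" using False F2 g3 by auto
          then have ek: "ed k = {k - 1, Suc (k - 1)}" unfolding ed_def using False F2 F3 by simp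
          have "{k - 1, Suc (k - 1)} \<in> {{i, Suc i} | i. g \<le> i \<and> Suc i < n}"
            by (rule CollectI, rule exI[of _ "k - 1"]) (use \<open>g \<le> k - 1\<close> \<open>Suc (k - 1) = k\<close> k in simp)
          then show ?thesis unfolding k(2) ek tadpole_E_def by (rule UnI2)
        qed
      qed
    qed
  qed
qed

lemma ed_inj: "inj_on ed {0..<n}"
  unfolding inj_on_def ed_def using g3 by (auto simp: doubleton_eq_iff split: if_splits)

abbreviation "dT \<equiv> degree (tadpole_E g n)"

lemma dT_vals: "dT 0 = 3" "dT (n - 1) = 1" "0 < i \<Longrightarrow> i < n - 1 \<Longrightarrow> dT i = 2"
  using tdeg0[OF g3 ng] tdeg_last[OF g3 ng] tdeg_mid[OF g3 ng] by auto

lemma pairval: "a \<noteq> b \<Longrightarrow> (\<Sum>x\<in>{a,b}. (real (dT x))^2) = (real (dT a))^2 + (real (dT b))^2"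
  by simp

lemma ed_val:
  assumes k: "k < n"
  shows "sqrt (\<Sum>x\<in>ed k. (real (dT x))^2) =
     sqrt 8 + (if k = 0 then sqrt 13 - sqrt 8 else 0) + (if k = g - 1 then sqrt 13 - sqrt 8 else 0)
       + (if k = g then sqrt 13 - sqrt 8 else 0) + (if k = n - 1 then sqrt 5 - sqrt 8 else 0)"
proof -
  consider "k = 0" | "0 < k \<and> Suc k < g" | "k = g - 1" | "k = g" | "g < k \<and> k < n - 1" | "k = n - 1"
    using k g3 by linarith
  then show ?thesis
  proof cases
    case 1
    then have "ed k = {0, 1}" unfolding ed_def using g3 by simp
    moreover have "dT 1 = 2" using dT_vals(3)[of 1] g3 ng by simp
    moreover have "k \<noteq> g - 1" "k \<noteq> g" "k \<noteq> n - 1" using 1 g3 ng by auto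
    ultimately show ?thesis using 1 g3 ng dT_vals by simp
  next
    case 2
    then have "ed k = {k, Suc k}" unfolding ed_def by simp
    moreover have "dT k = 2" "dT (Suc k) = 2" using dT_vals(3)[of k] dT_vals(3)[of "Suc k"] 2 ng by auto
    moreover have "k \<noteq> 0" "k \<noteq> g - 1" "k \<noteq> g" "k \<noteq> n - 1" using 2 g3 ng by auto
    ultimately show ?thesis using 2 g3 ng by (simp add: power2_eq_square)
  next
    case 3
    then have "ed k = {g - 1, 0}" unfolding ed_def using g3 by simp
    moreover have "dT (g - 1) = 2" using dT_vals(3)[of "g - 1"] g3 ng by simp
    moreover have "k \<noteq> 0" "k \<noteq> g" "k \<noteq> n - 1" using 3 g3 ng by auto
    ultimately show ?thesis using 3 g3 ng dT_vals by (simp add: power2_eq_square)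
  next
    case 4
    then have "ed k = {0, g}" unfolding ed_def using g3 by (auto simp: insert_commute)
    moreover have "dT g = 2" using dT_vals(3)[of g] g3 ng by simp
    moreover have "k \<noteq> 0" "k \<noteq> g - 1" "k \<noteq> n - 1" using 4 g3 ng by auto
    ultimately show ?thesis using 4 g3 ng dT_vals by (simp add: power2_eq_square)
  next
    case 5
    then have "k \<noteq> g - 1" "\<not> Suc k < g" "k \<noteq> g" by auto
    then have "ed k = {k - 1, k}" unfolding ed_def by simp
    moreover have "dT (k - 1) = 2" "dT k = 2" using dT_vals(3)[of "k - 1"] dT_vals(3)[of k] 5 g3 by auto
    moreover have "k - 1 \<noteq> k" using 5 by linarith
    moreover have "k \<noteq> 0" "k \<noteq> g - 1" "k \<noteq> g" "k \<noteq> n - 1" using 5 g3 ng by auto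
    ultimately show ?thesis using 5 g3 ng by (simp add: power2_eq_square)
  next
    case 6
    then have "k \<noteq> g - 1" "\<not> Suc k < g" "k \<noteq> g" "k - 1 = n - 2" using g3 ng by auto
    then have "ed k = {n - 2, n - 1}" unfolding ed_def using 6 by simp
    moreover have "dT (n - 2) = 2" using dT_vals(3)[of "n - 2"] g3 ng by simp
    moreover have "n - 2 \<noteq> n - 1" using ng by simp
    moreover have "k \<noteq> 0" "k \<noteq> g - 1" "k \<noteq> g" using 6 g3 ng by auto
    ultimately show ?thesis using 6 g3 ng dT_vals by (simp add: power2_eq_square)
  qed
qed

lemma tsombor: "sombor (tadpole_E g n) = sqrt 5 + 3 * sqrt 13 + 2 * sqrt 2 * (real n - 4)"
proof -
  have "sombor (tadpole_E g n) = (\<Sum>k\<in>{0..<n}. sqrt (\<Sum>x\<in>ed k. (real (dT x))^2))"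
    unfolding sombor_def ed_img by (simp add: sum.reindex[OF ed_inj])
  also have "\<dots> = (\<Sum>k\<in>{0..<n}. sqrt 8 + (if k = 0 then sqrt 13 - sqrt 8 else 0) + (if k = g - 1 then sqrt 13 - sqrt 8 else 0)
       + (if k = g then sqrt 13 - sqrt 8 else 0) + (if k = n - 1 then sqrt 5 - sqrt 8 else 0))"
    by (rule sum.cong) (auto simp: ed_val)
  also have "\<dots> = real n * sqrt 8 + 3 * (sqrt 13 - sqrt 8) + (sqrt 5 - sqrt 8)"
    using g3 ng by (simp add: sum.distrib sum.delta)
  also have "\<dots> = sqrt 5 + 3 * sqrt 13 + 2 * sqrt 2 * (real n - 4)"
    unfolding sqrt8 by (simp add: algebra_simps)
  finally show ?thesis .
qed

end


lemma img_mem: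
  assumes s: "simple_graph U T" and inj: "inj_on h U" and x: "x \<in> U" and e: "e \<in> T"
  shows "h x \<in> h ` e \<longleftrightarrow> x \<in> e"
  using inj x sg_sub[OF s e] by (auto simp: inj_on_def)

lemma img_inj:
  assumes s: "simple_graph U T" and inj: "inj_on h U"
  shows "inj_on (image h) T"
proof (rule inj_onI)
  fix e1 e2 assume "e1 \<in> T" "e2 \<in> T" "h ` e1 = h ` e2"
  then show "e1 = e2" using inj_on_image_eq_iff[OF inj] sg_sub[OF s] by blast
qed

lemma img_deg:
  assumes s: "simple_graph U T" and inj: "inj_on h U" and x: "x \<in> U"
  shows "degree (image h ` T) (h x) = degree T x"
proof -
  have "{e'\<in>image h ` T. h x \<in> e'} = image h ` {e\<in>T. x \<in> e}"
    using img_mem[OF s inj x] by auto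
  moreover have "inj_on (image h) {e\<in>T. x \<in> e}" using img_inj[OF s inj] by (rule inj_on_subset) auto
  ultimately show ?thesis unfolding degree_def by (simp add: card_image)
qed

lemma img_sombor:
  assumes s: "simple_graph U T" and inj: "inj_on h U"
  shows "sombor (image h ` T) = sombor T"
proof -
  have "sombor (image h ` T) = (\<Sum>e\<in>T. sqrt (\<Sum>y\<in>h ` e. (real (degree (image h ` T) y))^2))"
    unfolding sombor_def by (simp add: sum.reindex[OF img_inj[OF s inj]])
  also have "\<dots> = sombor T" unfolding sombor_def
  proof (rule sum.cong[OF refl])
    fix e assume e: "e \<in> T"
    have ie: "inj_on h e" using inj sg_sub[OF s e] by (rule inj_on_subset)
    have "(\<Sum>y\<in>h ` e. (real (degree (image h ` T) y))^2) = (\<Sum>x\<in>e. (real (degree (image h ` T) (h x)))^2)"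
      by (simp add: sum.reindex[OF ie])
    also have "\<dots> = (\<Sum>x\<in>e. (real (degree T x))^2)"
      using img_deg[OF s inj] sg_sub[OF s e] by (intro sum.cong) auto
    finally show "sqrt (\<Sum>y\<in>h ` e. (real (degree (image h ` T) y))^2) = sqrt (\<Sum>x\<in>e. (real (degree T x))^2)"
      by simp
  qed
  finally show ?thesis .
qed

lemma img_sg:
  assumes s: "simple_graph U T" and inj: "inj_on h U"
  shows "simple_graph (h ` U) (image h ` T)"
  unfolding simple_graph_def
proof (intro conjI ballI)
  show "finite (h ` U)" using sg_finV[OF s] by simp
  fix e' assume "e' \<in> image h ` T"
  then obtain e where e: "e \<in> T" "e' = h ` e" by auto
  then obtain a b where ab: "a \<noteq> b" "a \<in> U" "b \<in> U" "e = {a,b}" using sg_edge[OF s] by blast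
  then have "h a \<noteq> h b" using inj by (auto simp: inj_on_def)
  then show "\<exists>a b. a \<noteq> b \<and> a \<in> h ` U \<and> b \<in> h ` U \<and> e' = {a, b}" using ab e by auto
qed

lemma img_adj:
  assumes s: "simple_graph U T" and inj: "inj_on h U" and a: "a \<in> U" and b: "b \<in> U"
  shows "{h a, h b} \<in> image h ` T \<longleftrightarrow> {a,b} \<in> T"
proof -
  have "{h a, h b} = h ` {a,b}" by simp
  moreover have "h ` {a,b} \<in> image h ` T \<longleftrightarrow> {a,b} \<in> T"
  proof
    assume "h ` {a,b} \<in> image h ` T"
    then obtain e where "e \<in> T" "h ` {a,b} = h ` e" by auto
    moreover have "{a,b} \<subseteq> U" using a b by simp
    ultimately have "{a,b} = e" using inj_on_image_eq_iff[OF inj] sg_sub[OF s] by blast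
    then show "{a,b} \<in> T" using \<open>e \<in> T\<close> by simp
  next
    assume "{a,b} \<in> T"
    then show "h ` {a,b} \<in> image h ` T" by (rule imageI)
  qed
  ultimately show ?thesis by simp
qed

lemma img_conn:
  assumes s: "simple_graph U T" and inj: "inj_on h U" and c: "connected_graph U T"
  shows "connected_graph (h ` U) (image h ` T)"
  unfolding connected_graph_def
proof (intro conjI ballI)
  show "h ` U \<noteq> {}" using c unfolding connected_graph_def by simp
  fix x y assume "x \<in> h ` U" "y \<in> h ` U"
  then obtain a b where ab: "a \<in> U" "b \<in> U" "x = h a" "y = h b" by auto
  have "(adj T)\<^sup>*\<^sup>* a b" using c ab unfolding connected_graph_def by blast
  moreover have "(adj (image h ` T))\<^sup>*\<^sup>* (h p) (h q)" if "adj T p q" for p q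
  proof -
    have "p \<in> U" "q \<in> U" using adj_in[OF s that] by auto
    then have "adj (image h ` T) (h p) (h q)" using that img_adj[OF s inj] unfolding adj_def by simp
    then show ?thesis by simp
  qed
  ultimately show "(adj (image h ` T))\<^sup>*\<^sup>* x y" unfolding ab using rtr_map[of "adj T"] by blast
qed

lemma img_cycle:
  assumes s: "simple_graph U T" and inj: "inj_on h U" and c: "is_cycle T xs"
  shows "is_cycle (image h ` T) (map h xs)"
proof -
  have sub: "set xs \<subseteq> U" using cyc_set_sub[OF s c] .
  show ?thesis unfolding is_cycle_def
  proof (intro conjI allI impI)
    show "length (map h xs) \<ge> 3" using c unfolding is_cycle_def by simp
    show "distinct (map h xs)" using c sub inj unfolding is_cycle_def
      by (simp add: distinct_map inj_on_subset)
    fix i assume i: "i < length (map h xs)"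
    then have i': "i < length xs" by simp
    have "{xs ! i, xs ! ((i + 1) mod length xs)} \<in> T" using c i' unfolding is_cycle_def by blast
    moreover have m: "(i + 1) mod length xs < length xs" using i' by (intro mod_less_divisor) linarith
    moreover have "xs ! i \<in> U" "xs ! ((i + 1) mod length xs) \<in> U"
      using sub nth_mem[OF i'] nth_mem[OF m] by auto
    ultimately have "{h (xs ! i), h (xs ! ((i + 1) mod length xs))} \<in> image h ` T"
      using img_adj[OF s inj] by simp
    moreover have "map h xs ! ((i + 1) mod length xs) = h (xs ! ((i + 1) mod length xs))"
      using m by simp
    ultimately show "{map h xs ! i, map h xs ! ((i + 1) mod length (map h xs))} \<in> image h ` T"
      using i' by simp
  qed
qed


lemma competitor:
  fixes V :: "'a set"
  assumes g3: "g \<ge> 3" and ng: "n \<ge> g + 2" and fV: "finite V" and cV: "card V = n"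
  shows "\<exists>E'. simple_graph V E' \<and> connected_graph V E' \<and> has_girth E' g
            \<and> sombor E' = sqrt 5 + 3 * sqrt 13 + 2 * sqrt 2 * (real n - 4)"
proof -
  obtain h where h: "bij_betw h {0..<n} V" using ex_bij_betw_nat_finite[OF fV] cV by blast
  have inj: "inj_on h {0..<n}" and img: "h ` {0..<n} = V" using h unfolding bij_betw_def by auto
  define T' where "T' = image h ` tadpole_E g n"
  note ts = tsg[OF g3 ng]
  have s': "simple_graph V T'" unfolding T'_def using img_sg[OF ts inj] img by simp
  have c': "connected_graph V T'" unfolding T'_def using img_conn[OF ts inj tconn[OF g3 ng]] img by simp
  have cy: "is_cycle T' (map h [0..<g])" unfolding T'_def by (rule img_cycle[OF ts inj tcycle[OF g3 ng]])
  have so: "sombor T' = sqrt 5 + 3 * sqrt 13 + 2 * sqrt 2 * (real n - 4)"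
    unfolding T'_def using img_sombor[OF ts inj] tsombor[OF g3 ng] by simp
  have dg: "degree T' (h i) = degree (tadpole_E g n) i" if "i < n" for i
    unfolding T'_def using img_deg[OF ts inj] that by simp
  have w: "h 0 \<in> V" "h (n - 1) \<in> V" using img ng by auto
  have d0: "degree T' (h 0) = 3" using dg[of 0] tdeg0[OF g3 ng] ng by simp
  have dl: "degree T' (h (n - 1)) = 1" using dg[of "n - 1"] tdeg_last[OF g3 ng] ng by simp
  have dv: "\<forall>v\<in>V. v \<noteq> h 0 \<longrightarrow> v \<noteq> h (n - 1) \<longrightarrow> degree T' v = 2"
  proof (intro ballI impI)
    fix v assume v: "v \<in> V" "v \<noteq> h 0" "v \<noteq> h (n - 1)"
    then obtain i where i: "i < n" "v = h i" using img by auto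
    have "i \<noteq> 0" proof assume "i = 0" then show False using v(2) i(2) by simp qed
    moreover have "i \<noteq> n - 1" proof assume "i = n - 1" then show False using v(3) i(2) by simp qed
    ultimately have "0 < i" "i < n - 1" using i(1) by linarith+
    then show "degree T' v = 2" using dg i tdeg_mid[OF g3 ng] by simp
  qed
  have lg: "length (map h [0..<g]) = g" by simp
  have st: "\<forall>ys. is_cycle T' ys \<longrightarrow> set ys = set (map h [0..<g]) \<and> cycle_edges ys = cycle_edges (map h [0..<g])"
    using tad_structure[OF s' c' cy cV _ w(1) w(2) d0 dl dv] ng by simp
  have gi: "has_girth T' g" unfolding has_girth_def
  proof (intro conjI allI impI)
    show "\<exists>xs. is_cycle T' xs \<and> length xs = g" using cy lg by blast
    fix ys assume ys: "is_cycle T' ys"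
    have "length ys = card (set ys)" using cyc_card_set[OF ys] by simp
    also have "\<dots> = card (set (map h [0..<g]))" using st ys by simp
    also have "\<dots> = g" using cyc_card_set[OF cy] by simp
    finally show "g \<le> length ys" by simp
  qed
  show ?thesis using s' c' gi so by blast
qed

theorem theorem2p3:
  fixes V :: "'a set" and E :: "'a set set" and g n :: nat
  assumes "g \<ge> 3" and "n \<ge> g + 2"
    and "simple_graph V E" and "card V = n" and "connected_graph V E" and "has_girth E g"
    and "\<forall>(V' :: 'a set) E'. simple_graph V' E' \<and> card V' = n \<and> connected_graph V' E'
            \<and> has_girth E' g \<longrightarrow> sombor E \<le> sombor E'"
  shows "unicyclic V E \<and> graph_iso V E (tadpole_V n) (tadpole_E g n)
         \<and> sombor E = sqrt 5 + 3 * sqrt 13 + 2 * sqrt 2 * (real n - 4)"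
proof -
  note g3 = assms(1) and ng = assms(2) and s = assms(3) and cV = assms(4) and cn = assms(5)
    and gi = assms(6) and mn = assms(7)
  obtain xs where xs: "is_cycle E xs" "length xs = g" using gi unfolding has_girth_def by blast
  have fV: "finite V" using sg_finV[OF s] .
  define ST where "ST = sqrt 5 + 3 * sqrt 13 + 2 * sqrt 2 * (real n - 4)"
  have STK: "ST = 2 * sqrt 2 * real n + KK" unfolding ST_def KK_def by (simp add: algebra_simps)
  obtain E' where E': "simple_graph V E'" "connected_graph V E'" "has_girth E' g" "sombor E' = ST"
    using competitor[OF g3 ng fV cV] unfolding ST_def by blast
  have upper: "sombor E \<le> ST" using mn E' cV by auto
  have dpos: "degree E v \<ge> 1" if v: "v \<in> V" for v
  proof -
    have "card (V - {v}) = n - 1" using cV v fV by simp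
    then have "0 < card (V - {v})" using ng by simp
    then have "V - {v} \<noteq> {}" by (simp add: card_gt_0_iff)
    then obtain u where u: "u \<in> V" "u \<noteq> v" by blast
    have "(adj E)\<^sup>*\<^sup>* v u" using cn v u unfolding connected_graph_def by blast
    then obtain z where "adj E v z"
      by (rule converse_rtranclpE) (use u in auto)
    then have "{v,z} \<in> E" unfolding adj_def .
    then show ?thesis using deg_pos[OF s] by blast
  qed
  have nl: "\<not> (degree E a = 1 \<and> degree E b = 1)" if e: "{a,b} \<in> E" for a b
  proof
    assume d: "degree E a = 1 \<and> degree E b = 1"
    have e': "{b,a} \<in> E" using e by (simp add: insert_commute)
    have aV: "a \<in> V" using sg_sub[OF s e] by simp
    have "V \<subseteq> {a,b}"
    proof (rule closure_all[OF cn _ aV])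
      show "a \<in> {a,b}" by simp
      fix x y assume x: "x \<in> {a,b}" and xy: "adj E x y"
      show "y \<in> {a,b}"
      proof (cases "x = a")
        case True then show ?thesis using deg1_adj[OF s _ e] d xy by simp
      next
        case False then have "x = b" using x by simp
        then show ?thesis using deg1_adj[OF s _ e'] d xy by simp
      qed
    qed
    then have "card V \<le> card {a,b}" by (rule card_mono[rotated]) simp
    also have "\<dots> \<le> 2" by (simp add: card_insert_le_m1)
    finally show False using cV ng g3 by simp
  qed
  have mi: "2 * sqrt 2 * real n + lam * (2 * real (card E) - 2 * real n) + (\<Sum>v\<in>V. rv E v) \<le> sombor E"
    using main_ineq[OF s nl] cV by simp
  have mge: "n \<le> card E" using edges_ge_vertices[OF s cn xs(1)] cV by simp
  have lam_pos: "lam > 0"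
  proof -
    have "sqrt 2 > 0.75" by (rule real_less_rsqrt) (simp add: power2_eq_square)
    then show ?thesis unfolding lam_def using sq_bounds by simp
  qed
  have R3pos: "sqrt 5 - sqrt 2 / 2 > 0" using sq_bounds by simp
  have rv_nn: "rv E v \<ge> 0" if "v \<in> V" for v
  proof (cases "degree E v \<ge> 3")
    case True then show ?thesis using rv_high[OF True] R3pos by linarith
  next
    case False then have "degree E v = 1 \<or> degree E v = 2" using dpos[OF that] by linarith
    then show ?thesis using rv_low[of E v] by simp
  qed
  have lamterm: "lam * (2 * real (card E) - 2 * real n) \<ge> 0"
    using lam_pos mge by (intro mult_nonneg_nonneg) auto
  have sumle: "(\<Sum>v\<in>V. rv E v) \<le> KK" using mi upper STK lamterm by linarith
  obtain w where w: "w \<in> V" "degree E w \<ge> 3"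
  proof (rule ccontr)
    assume "\<not> thesis"
    then have le2: "\<forall>v\<in>V. degree E v \<le> 2" using that by force
    have "set xs \<subseteq> V" using cyc_set_sub[OF s xs(1)] .
    then have "\<forall>x\<in>set xs. degree E x \<le> 2" using le2 by blast
    then have "V = set xs" using two_reg[OF s cn xs(1)] by simp
    then have "n = g" using cV cyc_card_set[OF xs(1)] xs(2) by simp
    then show False using ng by simp
  qed
  have sum_ge: "(\<Sum>v\<in>A. rv E v) \<le> (\<Sum>v\<in>V. rv E v)" if "A \<subseteq> V" for A
    by (rule sum_mono2[OF fV that]) (use rv_nn in auto)
  have uniq: "degree E v \<le> 2" if v: "v \<in> V" "v \<noteq> w" for v
  proof (rule ccontr)
    assume "\<not> degree E v \<le> 2"
    then have "degree E v \<ge> 3" by simp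
    then have "rv E v \<ge> sqrt 5 - sqrt 2 / 2" by (rule rv_high)
    moreover have "rv E w \<ge> sqrt 5 - sqrt 2 / 2" by (rule rv_high[OF w(2)])
    moreover have "(\<Sum>x\<in>{w,v}. rv E x) \<le> (\<Sum>v\<in>V. rv E v)" by (rule sum_ge) (use v w in simp)
    moreover have "(\<Sum>x\<in>{w,v}. rv E x) = rv E w + rv E v" using v by simp
    ultimately show False using sumle N4 by (smt (verit))
  qed
  have nbw: "degree E u < 3" if "{w,u} \<in> E" for u
  proof -
    have "u \<in> V" using sg_sub[OF s that] by simp
    moreover have "u \<noteq> w" using sg_card2[OF s that] by auto
    ultimately show ?thesis using uniq by fastforce
  qed
  have "(\<Sum>x\<in>{w}. rv E x) \<le> (\<Sum>v\<in>V. rv E v)" by (rule sum_ge) (use w in simp)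
  then have sw: "rv E w \<le> (\<Sum>v\<in>V. rv E v)" by simp
  have rw_le: "rv E w \<le> KK" using sw sumle by simp
  have dw3: "degree E w = 3"
  proof (rule ccontr)
    assume "degree E w \<noteq> 3"
    then have "degree E w \<ge> 4" using w(2) by simp
    then have "rv E w > KK" using rv_iso(2)[OF s nbw w(2)] by simp
    then show False using rw_le by simp
  qed
  have rw: "rv E w \<ge> KK" using rv_iso(1)[OF s nbw w(2)] by simp
  have sum_KK: "(\<Sum>v\<in>V. rv E v) \<ge> KK" using sw rw by simp
  have "lam * (2 * real (card E) - 2 * real n) \<le> 0" using mi upper STK sum_KK by linarith
  then have "2 * real (card E) - 2 * real n \<le> 0" using lam_pos by (simp add: mult_le_0_iff)
  then have mn_eq: "card E = n" using mge by simp
  have SOeq: "sombor E = ST" using mi upper STK sum_KK mn_eq by simp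
  define L1 where "L1 = {v\<in>V - {w}. degree E v = 1}"
  have deg12: "degree E v = 1 \<or> degree E v = 2" if "v \<in> V - {w}" for v
    using dpos uniq that by fastforce
  have hs: "(\<Sum>v\<in>V. real (degree E v)) = 2 * real n"
    using handshake[OF s] mn_eq by (metis of_nat_mult of_nat_numeral of_nat_sum)
  have "(\<Sum>v\<in>V. real (degree E v)) = real (degree E w) + (\<Sum>v\<in>V - {w}. real (degree E v))"
    using fV w(1) by (simp add: sum.remove)
  also have "(\<Sum>v\<in>V - {w}. real (degree E v)) = (\<Sum>v\<in>V - {w}. 2 - (if degree E v = 1 then 1 else 0))"
    by (rule sum.cong) (use deg12 in auto)
  also have "\<dots> = 2 * real (card (V - {w})) - real (card L1)"
  proof -
    have "(\<Sum>v\<in>V - {w}. (if degree E v = 1 then 1 else 0::real)) = real (card L1)"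
      unfolding L1_def using fV by (simp add: sum.inter_filter[symmetric])
    then show ?thesis by (simp add: sum_subtractf)
  qed
  finally have eq: "(\<Sum>v\<in>V. real (degree E v)) = 3 + (2 * real (card (V - {w})) - real (card L1))"
    using dw3 by simp
  have "card (V - {w}) = n - 1" using cV fV w(1) by simp
  moreover have "real (n - 1) = real n - 1" using ng by (simp add: of_nat_diff)
  ultimately have "real (card (V - {w})) = real n - 1" by simp
  then have "real (card L1) = 1" using eq hs by linarith
  then have "card L1 = 1" by simp
  then obtain l where L1l: "L1 = {l}" by (rule card_1_singletonE)
  have lV: "l \<in> V" "l \<noteq> w" "degree E l = 1" using L1l unfolding L1_def by auto
  have dv: "\<forall>v\<in>V. v \<noteq> w \<longrightarrow> v \<noteq> l \<longrightarrow> degree E v = 2"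
  proof (intro ballI impI)
    fix v assume v: "v \<in> V" "v \<noteq> w" "v \<noteq> l"
    then have "v \<notin> L1" using L1l by simp
    then show "degree E v = 2" using deg12[of v] v unfolding L1_def by auto
  qed
  have le: "length xs + 1 \<le> n" using xs(2) ng by simp
  note ST = tad_structure[OF s cn xs(1) cV le w(1) lV(1) dw3 lV(3) dv]
  obtain h where h: "bij_betw h {0..<n} V"
    "\<forall>i<n. \<forall>j<n. ({h i, h j} \<in> E \<longleftrightarrow> {i,j} \<in> tadpole_E g n)"
    using ST xs(2) by blast
  have cycs: "\<forall>ys. is_cycle E ys \<longrightarrow> cycle_edges ys = cycle_edges xs" using ST by blast
  have iso: "graph_iso V E (tadpole_V n) (tadpole_E g n)"
    unfolding graph_iso_def tadpole_V_def
  proof (intro exI[of _ "inv_into {0..<n} h"] conjI ballI)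
    show "bij_betw (inv_into {0..<n} h) V {0..<n}" by (rule bij_betw_inv_into[OF h(1)])
    fix u v assume u: "u \<in> V" and v: "v \<in> V"
    have img: "h ` {0..<n} = V" using h(1) unfolding bij_betw_def by simp
    have ui: "u \<in> h ` {0..<n}" using u img by simp
    have fu: "inv_into {0..<n} h u \<in> {0..<n}" "h (inv_into {0..<n} h u) = u"
      by (rule inv_into_into[OF ui], rule f_inv_into_f[OF ui])
    have vi: "v \<in> h ` {0..<n}" using v img by simp
    have fv: "inv_into {0..<n} h v \<in> {0..<n}" "h (inv_into {0..<n} h v) = v"
      by (rule inv_into_into[OF vi], rule f_inv_into_f[OF vi])
    show "{u, v} \<in> E \<longleftrightarrow> {inv_into {0..<n} h u, inv_into {0..<n} h v} \<in> tadpole_E g n"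
      using h(2) fu fv by fastforce
  qed
  have "{cycle_edges ys | ys. is_cycle E ys} = {cycle_edges xs}" using cycs xs(1) by blast
  then have uni: "unicyclic V E" unfolding unicyclic_def using cn by simp
  show ?thesis using uni iso SOeq unfolding ST_def by simp
qed


end
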